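(* Let $M=(\mathcal{S},\mathcal{A},H,P,r,\mu)$ be a finite-horizon MDP (as in the context) whose action space $\mathcal{A}$ is a finite set. Let $\beta>0$ and let $Q=\{Q_h\}_{h=1}^H$ be continuous functions $Q_h:\mathcal{S}\times\mathcal{A}\to\mathbb{R}$. Define the softmax policy $$\pi_h^{Q,\beta}(a\mid s)=\frac{\exp(\beta Q_h(s,a))}{\sum_{a'\in\mathcal{A}}\exp(\beta Q_h(s,a'))},$$ and define $\pi^{Q^*,\beta}$ in the same way with $Q_h$ replaced by the optimal Q-value functions $Q_h^*$. Then $$0\le J^*(M)-J(M,\pi^{Q,\beta})\le \frac{H\log|\mathcal{A}|}{\beta}+2\beta H\sum_{h=1}^H\mathbb{E}_{M,\pi^{Q^*,\beta}}\Big[\max_{a\in\mathcal{A}}|Q_h^*(S_h,a)-Q_h(S_h,a)|\Big].$$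
   Context: A finite-horizon MDP $M=(\mathcal{S},\mathcal{A},H,P,r,\mu)$ consists of a state space $\mathcal{S}$ (a subset of a Euclidean space), an action space $\mathcal{A}$, a horizon $H\in\mathbb{N}$, transition kernels $P(\cdot\mid h,s,a)\in\mathcal{P}(\mathcal{S})$ for $(h,s,a)\in[H]\times\mathcal{S}\times\mathcal{A}$, a deterministic continuous reward function $r:[H]\times\mathcal{S}\times\mathcal{A}\to[0,1]$, and an initial distribution $\mu\in\mathcal{P}(\mathcal{S})$. A policy is a family $\pi=\{\pi_h(\cdot\mid s)\}_{h\in[H]}$ of distributions on $\mathcal{A}$ indexed by states. Under $\pi$, a trajectory is generated by $S_1\sim\mu$, $A_h\sim\pi_h(\cdot\mid S_h)$, $S_{h+1}\sim P(\cdot\mid h,S_h,A_h)$; $\mathbb{E}_{M,\pi}$ denotes expectation over this trajectory. $J(M,\pi)=\mathbb{E}_{M,\pi}[\sum_{h=1}^H r(h,S_h,A_h)]$ and $J^*(M)=\sup_\pi J(M,\pi)$. The Q-value function is $Q_h^\pi(s,a)=\mathbb{E}_{M,\pi}[\sum_{h'=h}^H r(h',S_{h'},A_{h'})\mid S_h=s,A_h=a]$, and $Q_h^*(s,a)=\sup_\pi Q_h^\pi(s,a)$. *)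

theory Defs
  imports "HOL-Probability.Probability"
begin

(* Finite-horizon MDP with state space SS (a subset of a Euclidean space, with the
   restricted Borel sigma-algebra), finite action type 'a (action space = UNIV),
   horizon H (steps 1..H), kernels P h s a, reward r h s a, initial law mu. *)

definition SM :: "'s::topological_space set \<Rightarrow> 's measure" where
  "SM SS = restrict_space borel SS"

definition SAM :: "'s::topological_space set \<Rightarrow> ('s \<times> 'a) measure" where
  "SAM SS = SM SS \<Otimes>\<^sub>M count_space (UNIV :: 'a set)"

definition is_mdp :: "'s::euclidean_space set \<Rightarrow> nat \<Rightarrow> (nat \<Rightarrow> 's \<Rightarrow> 'a::finite \<Rightarrow> 's measure)
    \<Rightarrow> (nat \<Rightarrow> 's \<Rightarrow> 'a \<Rightarrow> real) \<Rightarrow> 's measure \<Rightarrow> bool" where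
  "is_mdp SS H P r \<mu> \<longleftrightarrow>
     prob_space \<mu> \<and> sets \<mu> = sets (SM SS) \<and>
     (\<forall>h\<in>{1..H}. \<forall>s\<in>SS. \<forall>a. prob_space (P h s a) \<and> sets (P h s a) = sets (SM SS)) \<and>
     (\<forall>h\<in>{1..H}. (\<lambda>(s, a). P h s a) \<in> measurable (SAM SS) (subprob_algebra (SM SS))) \<and>
     (\<forall>h\<in>{1..H}. \<forall>s\<in>SS. \<forall>a. 0 \<le> r h s a \<and> r h s a \<le> 1) \<and>
     (\<forall>h\<in>{1..H}. \<forall>a. continuous_on SS (\<lambda>s. r h s a))"

definition is_policy :: "'s::topological_space set \<Rightarrow> nat \<Rightarrow> (nat \<Rightarrow> 's \<Rightarrow> 'a pmf) \<Rightarrow> bool" where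
  "is_policy SS H \<pi> \<longleftrightarrow> (\<forall>h\<in>{1..H}. \<forall>a. (\<lambda>s. pmf (\<pi> h s) a) \<in> borel_measurable (SM SS))"

definition act_kernel :: "'s::topological_space set \<Rightarrow> (nat \<Rightarrow> 's \<Rightarrow> 'a pmf) \<Rightarrow> nat \<Rightarrow> 's \<Rightarrow> ('s \<times> 'a) measure" where
  "act_kernel SS \<pi> h s = distr (measure_pmf (\<pi> h s)) (SAM SS) (\<lambda>a. (s, a))"

(* given (S_h, A_h) = (s,a), law of (S_{h+1}, A_{h+1}) *)
definition step_kernel :: "'s::topological_space set \<Rightarrow> (nat \<Rightarrow> 's \<Rightarrow> 'a \<Rightarrow> 's measure)
    \<Rightarrow> (nat \<Rightarrow> 's \<Rightarrow> 'a pmf) \<Rightarrow> nat \<Rightarrow> 's \<times> 'a \<Rightarrow> ('s \<times> 'a) measure" where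
  "step_kernel SS P \<pi> h = (\<lambda>(s, a). P h s a \<bind> act_kernel SS \<pi> (Suc h))"

(* occ SS P pi h0 D n = law of (S_{h0+n}, A_{h0+n}) when (S_{h0}, A_{h0}) ~ D *)
primrec occ :: "'s::topological_space set \<Rightarrow> (nat \<Rightarrow> 's \<Rightarrow> 'a \<Rightarrow> 's measure)
    \<Rightarrow> (nat \<Rightarrow> 's \<Rightarrow> 'a pmf) \<Rightarrow> nat \<Rightarrow> ('s \<times> 'a) measure \<Rightarrow> nat \<Rightarrow> ('s \<times> 'a) measure" where
  "occ SS P \<pi> h0 D 0 = D"
| "occ SS P \<pi> h0 D (Suc n) = occ SS P \<pi> h0 D n \<bind> step_kernel SS P \<pi> (h0 + n)"

definition init_dist :: "'s::topological_space set \<Rightarrow> 's measure \<Rightarrow> (nat \<Rightarrow> 's \<Rightarrow> 'a pmf) \<Rightarrow> ('s \<times> 'a) measure" where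
  "init_dist SS \<mu> \<pi> = \<mu> \<bind> act_kernel SS \<pi> 1"

(* law of (S_h, A_h) under E_{M,pi} *)
definition traj_law :: "'s::topological_space set \<Rightarrow> (nat \<Rightarrow> 's \<Rightarrow> 'a \<Rightarrow> 's measure) \<Rightarrow> 's measure
    \<Rightarrow> (nat \<Rightarrow> 's \<Rightarrow> 'a pmf) \<Rightarrow> nat \<Rightarrow> ('s \<times> 'a) measure" where
  "traj_law SS P \<mu> \<pi> h = occ SS P \<pi> 1 (init_dist SS \<mu> \<pi>) (h - 1)"

(* J(M, pi) = E_{M,pi}[ sum_{h=1}^H r(h, S_h, A_h) ] *)
definition mdp_J :: "'s::topological_space set \<Rightarrow> nat \<Rightarrow> (nat \<Rightarrow> 's \<Rightarrow> 'a \<Rightarrow> 's measure)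
    \<Rightarrow> (nat \<Rightarrow> 's \<Rightarrow> 'a \<Rightarrow> real) \<Rightarrow> 's measure \<Rightarrow> (nat \<Rightarrow> 's \<Rightarrow> 'a pmf) \<Rightarrow> real" where
  "mdp_J SS H P r \<mu> \<pi> = (\<Sum>h = 1..H. \<integral>x. r h (fst x) (snd x) \<partial>traj_law SS P \<mu> \<pi> h)"

definition mdp_Jstar :: "'s::topological_space set \<Rightarrow> nat \<Rightarrow> (nat \<Rightarrow> 's \<Rightarrow> 'a \<Rightarrow> 's measure)
    \<Rightarrow> (nat \<Rightarrow> 's \<Rightarrow> 'a \<Rightarrow> real) \<Rightarrow> 's measure \<Rightarrow> real" where
  "mdp_Jstar SS H P r \<mu> = (SUP \<pi>\<in>{\<pi>. is_policy SS H \<pi>}. mdp_J SS H P r \<mu> \<pi>)"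

(* Q^pi_h(s,a) = E_{M,pi}[ sum_{h'=h}^H r(h', S_h', A_h') | S_h = s, A_h = a ] *)
definition Qpi :: "'s::topological_space set \<Rightarrow> nat \<Rightarrow> (nat \<Rightarrow> 's \<Rightarrow> 'a \<Rightarrow> 's measure)
    \<Rightarrow> (nat \<Rightarrow> 's \<Rightarrow> 'a \<Rightarrow> real) \<Rightarrow> (nat \<Rightarrow> 's \<Rightarrow> 'a pmf) \<Rightarrow> nat \<Rightarrow> 's \<Rightarrow> 'a \<Rightarrow> real" where
  "Qpi SS H P r \<pi> h s a =
     (\<Sum>k = h..H. \<integral>x. r k (fst x) (snd x) \<partial>occ SS P \<pi> h (return (SAM SS) (s, a)) (k - h))"

definition Qstar :: "'s::topological_space set \<Rightarrow> nat \<Rightarrow> (nat \<Rightarrow> 's \<Rightarrow> 'a \<Rightarrow> 's measure)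
    \<Rightarrow> (nat \<Rightarrow> 's \<Rightarrow> 'a \<Rightarrow> real) \<Rightarrow> nat \<Rightarrow> 's \<Rightarrow> 'a \<Rightarrow> real" where
  "Qstar SS H P r h s a = (SUP \<pi>\<in>{\<pi>. is_policy SS H \<pi>}. Qpi SS H P r \<pi> h s a)"

definition softmax_policy :: "real \<Rightarrow> (nat \<Rightarrow> 's \<Rightarrow> 'a::finite \<Rightarrow> real) \<Rightarrow> nat \<Rightarrow> 's \<Rightarrow> 'a pmf" where
  "softmax_policy \<beta> Q h s =
     embed_pmf (\<lambda>a. exp (\<beta> * Q h s a) / (\<Sum>a'\<in>UNIV. exp (\<beta> * Q h s a')))"

end

theory Submission
  imports Defs
begin


lemma bind_prob_gen:
  assumes M: "prob_space M" "sets M = sets A" and K: "K \<in> measurable A (subprob_algebra N)"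
    and Kp: "\<And>x. x \<in> space A \<Longrightarrow> prob_space (K x)"
  shows "prob_space (M \<bind> K)" "sets (M \<bind> K) = sets N"
proof -
  have K': "K \<in> measurable M (subprob_algebra N)"
    using K M(2) by (simp cong: measurable_cong_sets)
  have sp: "space M = space A" using M(2) by (rule sets_eq_imp_space_eq)
  show "prob_space (M \<bind> K)"
    by (rule prob_space.prob_space_bind[OF M(1) _ K']) (use Kp sp in auto)
  show "sets (M \<bind> K) = sets N"
    by (rule sets_bind) (use sets_kernel[OF K'] prob_space.not_empty[OF M(1)] in auto)
qed

lemma int_bind_gen:
  fixes f :: "_ \<Rightarrow> real"
  assumes M: "prob_space M" "sets M = sets A" and K: "K \<in> measurable A (subprob_algebra N)"
    and f: "f \<in> borel_measurable N" "\<And>x. x \<in> space N \<Longrightarrow> \<bar>f x\<bar> \<le> B"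
  shows "integral\<^sup>L (M \<bind> K) f = (\<integral>x. integral\<^sup>L (K x) f \<partial>M)"
proof -
  have K': "K \<in> measurable M (subprob_algebra N)"
    using K M(2) by (simp cong: measurable_cong_sets)
  show ?thesis
  proof (rule integral_bind[OF f K'])
    show "finite_measure M" using M(1) by (simp add: prob_space_def)
    show "AE x in M. emeasure (K x) (space (K x)) \<le> ennreal 1"
      using K' by (auto intro!: AE_I2 subprob_space.subprob_emeasure_le_1 dest: subprob_space_kernel)
  qed
qed

lemma int_bind_gen_integrable:
  fixes f :: "_ \<Rightarrow> real"
  assumes M: "prob_space M" "sets M = sets A" and K: "K \<in> measurable A (subprob_algebra N)"
    and f: "f \<in> borel_measurable N" "\<And>x. x \<in> space N \<Longrightarrow> \<bar>f x\<bar> \<le> B"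
  shows "integrable (M \<bind> K) f"
proof -
  have K': "K \<in> measurable M (subprob_algebra N)"
    using K M(2) by (simp cong: measurable_cong_sets)
  show ?thesis
  proof (rule integrable_bind[OF f K'])
    show "finite_measure M" using M(1) by (simp add: prob_space_def)
    show "AE x in M. emeasure (K x) (space (K x)) \<le> ennreal 1"
      using K' by (auto intro!: AE_I2 subprob_space.subprob_emeasure_le_1 dest: subprob_space_kernel)
  qed
qed

lemma integ_gen:
  fixes f :: "_ \<Rightarrow> real"
  assumes "prob_space M" "sets M = sets N" "f \<in> borel_measurable N" "\<And>x. x \<in> space N \<Longrightarrow> \<bar>f x\<bar> \<le> B"
  shows "integrable M f"
proof -
  interpret prob_space M by fact
  have sp: "space M = space N" using assms(2) by (rule sets_eq_imp_space_eq)
  show ?thesis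
  proof (rule integrable_const_bound[where B=B])
    show "f \<in> borel_measurable M"
      by (subst measurable_cong_sets[OF assms(2) refl]) (rule assms(3))
    show "AE x in M. norm (f x) \<le> B"
      by (rule AE_I2) (use assms(4) sp in auto)
  qed
qed

lemma int_le_gen:
  fixes f :: "_ \<Rightarrow> real"
  assumes "prob_space M" "sets M = sets N" "f \<in> borel_measurable N" "\<And>x. x \<in> space N \<Longrightarrow> \<bar>f x\<bar> \<le> B"
    "\<And>x. x \<in> space N \<Longrightarrow> f x \<le> c"
  shows "(\<integral>x. f x \<partial>M) \<le> c"
proof -
  interpret prob_space M by fact
  have sp: "space M = space N" using assms(2) by (rule sets_eq_imp_space_eq)
  show ?thesis
    by (rule integral_le_const[OF integ_gen[OF assms(1-4)]]) (use assms sp in auto)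
qed

lemma int_ge_gen:
  fixes f :: "_ \<Rightarrow> real"
  assumes "prob_space M" "sets M = sets N" "f \<in> borel_measurable N" "\<And>x. x \<in> space N \<Longrightarrow> \<bar>f x\<bar> \<le> B"
    "\<And>x. x \<in> space N \<Longrightarrow> c \<le> f x"
  shows "c \<le> (\<integral>x. f x \<partial>M)"
proof -
  interpret prob_space M by fact
  have sp: "space M = space N" using assms(2) by (rule sets_eq_imp_space_eq)
  show ?thesis
    by (rule integral_ge_const[OF integ_gen[OF assms(1-4)]]) (use assms sp in auto)
qed

lemma int_mono_gen:
  fixes f g :: "_ \<Rightarrow> real"
  assumes "prob_space M" "sets M = sets N" "f \<in> borel_measurable N" "\<And>x. x \<in> space N \<Longrightarrow> \<bar>f x\<bar> \<le> B"
    "g \<in> borel_measurable N" "\<And>x. x \<in> space N \<Longrightarrow> \<bar>g x\<bar> \<le> B'"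
    "\<And>x. x \<in> space N \<Longrightarrow> f x \<le> g x"
  shows "(\<integral>x. f x \<partial>M) \<le> (\<integral>x. g x \<partial>M)"
proof -
  have sp: "space M = space N" using assms(2) by (rule sets_eq_imp_space_eq)
  show ?thesis
    by (rule integral_mono[OF integ_gen[OF assms(1-4)] integ_gen[OF assms(1,2,5,6)]]) (use assms sp in auto)
qed

lemma int_cong_gen:
  fixes f g :: "_ \<Rightarrow> real"
  assumes "sets M = sets N" "\<And>x. x \<in> space N \<Longrightarrow> f x = g x"
  shows "(\<integral>x. f x \<partial>M) = (\<integral>x. g x \<partial>M)"
proof -
  have sp: "space M = space N" using assms(1) by (rule sets_eq_imp_space_eq)
  show ?thesis by (rule Bochner_Integration.integral_cong) (use assms sp in auto)
qed

fun Wv :: "'s::topological_space set \<Rightarrow> (nat \<Rightarrow> 's \<Rightarrow> 'a \<Rightarrow> 's measure) \<Rightarrow> (nat \<Rightarrow> 's \<Rightarrow> 'a \<Rightarrow> real)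
    \<Rightarrow> nat \<Rightarrow> nat \<Rightarrow> 's \<Rightarrow> 'a::finite \<Rightarrow> real" where
  "Wv SS P r 0 h s a = 0"
| "Wv SS P r (Suc n) h s a = r h s a + (\<integral>s'. Max (range (Wv SS P r n (Suc h) s')) \<partial>P h s a)"

fun Gv :: "'s::topological_space set \<Rightarrow> (nat \<Rightarrow> 's \<Rightarrow> 'a \<Rightarrow> 's measure) \<Rightarrow> (nat \<Rightarrow> 's \<Rightarrow> 'a \<Rightarrow> real)
    \<Rightarrow> (nat \<Rightarrow> 's \<Rightarrow> 'a pmf) \<Rightarrow> nat \<Rightarrow> nat \<Rightarrow> 's \<Rightarrow> 'a::finite \<Rightarrow> real" where
  "Gv SS P r \<pi> 0 h s a = 0"
| "Gv SS P r \<pi> (Suc n) h s a = r h s a + (\<integral>s'. (\<Sum>b\<in>UNIV. pmf (\<pi> (Suc h) s') b * Gv SS P r \<pi> n (Suc h) s' b) \<partial>P h s a)"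

lemma pmf_avg_le_Max:
  fixes f :: "'a::finite \<Rightarrow> real"
  shows "(\<Sum>b\<in>UNIV. pmf p b * f b) \<le> Max (range f)"
proof -
  have "(\<Sum>b\<in>UNIV. pmf p b * f b) \<le> (\<Sum>b\<in>UNIV. pmf p b * Max (range f))"
    by (intro sum_mono mult_left_mono) (auto simp: pmf_nonneg)
  also have "\<dots> = Max (range f)"
    by (simp add: sum_distrib_right[symmetric] sum_pmf_eq_1)
  finally show ?thesis .
qed

lemma pmf_avg_bnd:
  fixes f :: "'a::finite \<Rightarrow> real"
  assumes "\<And>b. lo \<le> f b" "\<And>b. f b \<le> hi"
  shows "lo \<le> (\<Sum>b\<in>UNIV. pmf p b * f b)" "(\<Sum>b\<in>UNIV. pmf p b * f b) \<le> hi"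
proof -
  have "(\<Sum>b\<in>UNIV. pmf p b * lo) \<le> (\<Sum>b\<in>UNIV. pmf p b * f b)"
    by (intro sum_mono mult_left_mono) (auto simp: pmf_nonneg assms)
  then show "lo \<le> (\<Sum>b\<in>UNIV. pmf p b * f b)"
    by (simp add: sum_distrib_right[symmetric] sum_pmf_eq_1)
  have "(\<Sum>b\<in>UNIV. pmf p b * f b) \<le> (\<Sum>b\<in>UNIV. pmf p b * hi)"
    by (intro sum_mono mult_left_mono) (auto simp: pmf_nonneg assms)
  then show "(\<Sum>b\<in>UNIV. pmf p b * f b) \<le> hi"
    by (simp add: sum_distrib_right[symmetric] sum_pmf_eq_1)
qed

locale mdp =
  fixes SS :: "'s::euclidean_space set" and H :: nat
    and P :: "nat \<Rightarrow> 's \<Rightarrow> 'a::finite \<Rightarrow> 's measure"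
    and r :: "nat \<Rightarrow> 's \<Rightarrow> 'a \<Rightarrow> real" and \<mu> :: "'s measure"
  assumes mdp: "is_mdp SS H P r \<mu>"
begin

lemma space_SM[simp]: "space (SM SS) = SS" by (simp add: SM_def space_restrict_space)
lemma space_SAM[simp]: "space (SAM SS) = SS \<times> UNIV" by (simp add: SAM_def space_pair_measure)

lemma meas_pair:
  fixes F :: "'s \<Rightarrow> 'a \<Rightarrow> real"
  assumes "\<And>a. (\<lambda>s. F s a) \<in> borel_measurable (SM SS)"
  shows "(\<lambda>x. F (fst x) (snd x) :: real) \<in> borel_measurable (SAM SS)"
proof -
  have "(\<lambda>x. F (fst x) (snd x)) \<in> borel_measurable (SM SS \<Otimes>\<^sub>M count_space (UNIV::'a set))"
    by (rule measurable_compose_countable[where f="\<lambda>i x. F (fst x) i", OF measurable_compose[OF measurable_fst assms] measurable_snd])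
  then show ?thesis by (simp add: SAM_def)
qed

lemma meas_slice:
  fixes f :: "'s \<times> 'a \<Rightarrow> real"
  assumes "f \<in> borel_measurable (SAM SS)"
  shows "(\<lambda>s. f (s, a) :: real) \<in> borel_measurable (SM SS)"
  using assms unfolding SAM_def by measurable

lemma mu_prob: "prob_space \<mu>" and sets_mu: "sets \<mu> = sets (SM SS)"
  using mdp by (auto simp: is_mdp_def)
lemma P_prob: "h \<in> {1..H} \<Longrightarrow> s \<in> SS \<Longrightarrow> prob_space (P h s a)"
  and sets_P: "h \<in> {1..H} \<Longrightarrow> s \<in> SS \<Longrightarrow> sets (P h s a) = sets (SM SS)"
  using mdp by (auto simp: is_mdp_def)
lemma P_meas: "h \<in> {1..H} \<Longrightarrow> (\<lambda>x. P h (fst x) (snd x)) \<in> measurable (SAM SS) (subprob_algebra (SM SS))"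
  using mdp by (auto simp: is_mdp_def case_prod_beta')
lemma r_bnd: "h \<in> {1..H} \<Longrightarrow> s \<in> SS \<Longrightarrow> 0 \<le> r h s a \<and> r h s a \<le> 1"
  using mdp by (auto simp: is_mdp_def)
lemma r_abs: "k \<in> {1..H} \<Longrightarrow> x \<in> space (SAM SS) \<Longrightarrow> \<bar>r k (fst x) (snd x)\<bar> \<le> 1"
  using r_bnd[of k "fst x" "snd x"] by (cases x) auto

lemma r_meas: "h \<in> {1..H} \<Longrightarrow> (\<lambda>x. r h (fst x) (snd x)) \<in> borel_measurable (SAM SS)"
  apply (rule meas_pair)
  using mdp unfolding is_mdp_def SM_def by (auto intro: borel_measurable_continuous_on_restrict)

lemma Pair_meas: "(\<lambda>s. (s, a)) \<in> measurable (SM SS) (SAM SS)"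
  unfolding SAM_def by measurable

lemma P_int_meas:
  fixes g :: "'s \<Rightarrow> real"
  assumes "h \<in> {1..H}" "g \<in> borel_measurable (SM SS)"
  shows "(\<lambda>x. \<integral>s'. g s' \<partial>P h (fst x) (snd x)) \<in> borel_measurable (SAM SS)"
  using measurable_compose[OF P_meas[OF assms(1)] integral_measurable_subprob_algebra[OF assms(2)]] by simp

lemma P_int_bnd:
  fixes g :: "'s \<Rightarrow> real"
  assumes "h \<in> {1..H}" "s \<in> SS" "g \<in> borel_measurable (SM SS)"
    "\<And>x. x \<in> SS \<Longrightarrow> lo \<le> g x" "\<And>x. x \<in> SS \<Longrightarrow> g x \<le> hi"
  shows "lo \<le> (\<integral>s'. g s' \<partial>P h s a)" "(\<integral>s'. g s' \<partial>P h s a) \<le> hi"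
proof -
  have b: "\<And>x. x \<in> space (SM SS) \<Longrightarrow> \<bar>g x\<bar> \<le> \<bar>lo\<bar> + \<bar>hi\<bar>"
    using assms by fastforce
  show "lo \<le> (\<integral>s'. g s' \<partial>P h s a)"
    by (rule int_ge_gen[OF P_prob sets_P assms(3) b]) (use assms in auto)
  show "(\<integral>s'. g s' \<partial>P h s a) \<le> hi"
    by (rule int_le_gen[OF P_prob sets_P assms(3) b]) (use assms in auto)
qed

lemma Max_meas:
  fixes F :: "'s \<Rightarrow> 'a \<Rightarrow> real"
  assumes "(\<lambda>x. F (fst x) (snd x)) \<in> borel_measurable (SAM SS)"
  shows "(\<lambda>s. Max (range (F s))) \<in> borel_measurable (SM SS)"
proof -
  have "(\<lambda>s. Max ((\<lambda>b. F s b) ` UNIV)) \<in> borel_measurable (SM SS)"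
  proof (rule borel_measurable_Max)
    fix b :: 'a
    show "(\<lambda>s. F s b) \<in> borel_measurable (SM SS)"
      using meas_slice[OF assms, of b] by simp
  qed simp
  then show ?thesis by simp
qed

lemma avg_meas:
  fixes F :: "'s \<Rightarrow> 'a \<Rightarrow> real"
  assumes "(\<lambda>x. F (fst x) (snd x)) \<in> borel_measurable (SAM SS)"
    and "\<And>b. (\<lambda>s. pmf (\<pi> s) b) \<in> borel_measurable (SM SS)"
  shows "(\<lambda>s. \<Sum>b\<in>UNIV. pmf (\<pi> s) b * F s b) \<in> borel_measurable (SM SS)"
proof -
  have sl: "\<And>b. (\<lambda>s. F s b) \<in> borel_measurable (SM SS)"
    using meas_slice[OF assms(1)] by simp
  show ?thesis
    by (intro borel_measurable_sum borel_measurable_times sl assms(2))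
qed

abbreviation "W h \<equiv> Wv SS P r (Suc H - h) h"

lemma Wv_props:
  "n + h = Suc H \<Longrightarrow> 1 \<le> h \<Longrightarrow> (\<lambda>x. Wv SS P r n h (fst x) (snd x)) \<in> borel_measurable (SAM SS)
     \<and> (\<forall>s\<in>SS. \<forall>a. 0 \<le> Wv SS P r n h s a \<and> Wv SS P r n h s a \<le> real n)"
proof (induction n arbitrary: h)
  case 0 then show ?case by simp
next
  case (Suc n)
  then have IH: "(\<lambda>x. Wv SS P r n (Suc h) (fst x) (snd x)) \<in> borel_measurable (SAM SS)"
    "\<And>s a. s \<in> SS \<Longrightarrow> 0 \<le> Wv SS P r n (Suc h) s a \<and> Wv SS P r n (Suc h) s a \<le> real n"
    by auto
  have h: "h \<in> {1..H}" using Suc.prems by auto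
  have mm: "(\<lambda>s. Max (range (Wv SS P r n (Suc h) s))) \<in> borel_measurable (SM SS)"
    by (rule Max_meas[OF IH(1)])
  have mb: "0 \<le> Max (range (Wv SS P r n (Suc h) s)) \<and> Max (range (Wv SS P r n (Suc h) s)) \<le> real n"
    if "s \<in> SS" for s
    using IH(2)[OF that] by (auto simp: Max_ge_iff Max_le_iff)
  have "(\<lambda>x. r h (fst x) (snd x) + (\<integral>s'. Max (range (Wv SS P r n (Suc h) s')) \<partial>P h (fst x) (snd x)))
      \<in> borel_measurable (SAM SS)"
    by (rule borel_measurable_add[OF r_meas[OF h] P_int_meas[OF h mm]])
  moreover have "0 \<le> Wv SS P r (Suc n) h s a \<and> Wv SS P r (Suc n) h s a \<le> real (Suc n)" if "s \<in> SS" for s a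
    using P_int_bnd[OF h that mm, of 0 "real n" a] mb r_bnd[OF h that, of a] by auto
  ultimately show ?case by simp
qed

lemma W_meas: "h \<in> {1..H} \<Longrightarrow> (\<lambda>x. W h (fst x) (snd x)) \<in> borel_measurable (SAM SS)"
  using Wv_props[of "Suc H - h" h] by auto

lemma W_bnd: "h \<in> {1..H} \<Longrightarrow> s \<in> SS \<Longrightarrow> 0 \<le> W h s a \<and> W h s a \<le> real (Suc H - h)"
  using Wv_props[of "Suc H - h" h] by auto

lemma W_eq: "h \<in> {1..H} \<Longrightarrow> W h s a = r h s a + (\<integral>s'. Max (range (Wv SS P r (Suc H - Suc h) (Suc h) s')) \<partial>P h s a)"
  by (simp add: Suc_diff_le)

end

locale pol = mdp SS H P r \<mu> for SS :: "'s::euclidean_space set" and H :: nat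
    and P :: "nat \<Rightarrow> 's \<Rightarrow> 'a::finite \<Rightarrow> 's measure"
    and r :: "nat \<Rightarrow> 's \<Rightarrow> 'a \<Rightarrow> real" and \<mu> :: "'s measure" +
  fixes \<pi> :: "nat \<Rightarrow> 's \<Rightarrow> 'a pmf"
  assumes pol: "is_policy SS H \<pi>"
begin

lemma act_prob: "s \<in> SS \<Longrightarrow> prob_space (act_kernel SS \<pi> h s)"
  unfolding act_kernel_def
  by (rule prob_space.prob_space_distr) (auto simp: measure_pmf.prob_space_axioms)

lemma sets_act[simp]: "sets (act_kernel SS \<pi> h s) = sets (SAM SS)"
  unfolding act_kernel_def by simp

lemma act_int:
  assumes "s \<in> SS" "f \<in> borel_measurable (SAM SS)"
  shows "(\<integral>x. f x \<partial>act_kernel SS \<pi> h s) = (\<Sum>b\<in>UNIV. pmf (\<pi> h s) b * f (s, b))"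
  unfolding act_kernel_def
  using assms by (subst integral_distr) (auto simp: integral_measure_pmf[where A=UNIV] Pair_meas)

lemma act_emeasure:
  assumes "s \<in> SS" "A \<in> sets (SAM SS)"
  shows "emeasure (act_kernel SS \<pi> h s) A = ennreal (\<Sum>b\<in>UNIV. pmf (\<pi> h s) b * indicator A (s, b))"
proof -
  have "emeasure (act_kernel SS \<pi> h s) A = emeasure (measure_pmf (\<pi> h s)) {b. (s, b) \<in> A}"
    unfolding act_kernel_def using assms by (subst emeasure_distr) (auto simp: vimage_def)
  also have "\<dots> = ennreal (\<Sum>b\<in>{b. (s, b) \<in> A}. pmf (\<pi> h s) b)"
    by (subst emeasure_measure_pmf_finite) auto
  also have "(\<Sum>b\<in>{b. (s, b) \<in> A}. pmf (\<pi> h s) b) = (\<Sum>b\<in>UNIV. pmf (\<pi> h s) b * indicator A (s, b))"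
    by (rule sum.mono_neutral_cong_left) (auto simp: indicator_def)
  finally show ?thesis .
qed

lemma act_meas:
  assumes h: "h \<in> {1..H}"
  shows "act_kernel SS \<pi> h \<in> measurable (SM SS) (subprob_algebra (SAM SS))"
proof (rule measurable_subprob_algebra)
  fix s assume "s \<in> space (SM SS)"
  then show "subprob_space (act_kernel SS \<pi> h s)"
    using act_prob prob_space_imp_subprob_space by auto
next
  fix A :: "('s \<times> 'a) set" assume A: "A \<in> sets (SAM SS)"
  have pm: "(\<lambda>s. pmf (\<pi> h s) b) \<in> borel_measurable (SM SS)" for b
    using pol h by (auto simp: is_policy_def)
  have im: "(\<lambda>s. indicator A (s, b) :: real) \<in> borel_measurable (SM SS)" for b
    using A Pair_meas by measurable
  have "(\<lambda>s. ennreal (\<Sum>b\<in>UNIV. pmf (\<pi> h s) b * indicator A (s, b))) \<in> borel_measurable (SM SS)"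
    using pm im by measurable
  then show "(\<lambda>s. emeasure (act_kernel SS \<pi> h s) A) \<in> borel_measurable (SM SS)"
    by (rule measurable_cong[THEN iffD1, rotated]) (use A in \<open>auto simp: act_emeasure\<close>)
qed auto

lemma act_probalg: "h \<in> {1..H} \<Longrightarrow> x \<in> space (SM SS) \<Longrightarrow> prob_space (act_kernel SS \<pi> h x)"
  using act_prob by auto

lemma step_eq: "step_kernel SS P \<pi> h = (\<lambda>x. P h (fst x) (snd x) \<bind> act_kernel SS \<pi> (Suc h))"
  unfolding step_kernel_def by (auto simp: case_prod_beta')

lemma step_meas:
  assumes "h \<in> {1..H}" "Suc h \<le> H"
  shows "step_kernel SS P \<pi> h \<in> measurable (SAM SS) (subprob_algebra (SAM SS))"
  unfolding step_eq
  by (rule measurable_bind2[OF P_meas act_meas]) (use assms in auto)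

lemma step_prob:
  assumes "h \<in> {1..H}" "Suc h \<le> H" "x \<in> space (SAM SS)"
  shows "prob_space (step_kernel SS P \<pi> h x)" "sets (step_kernel SS P \<pi> h x) = sets (SAM SS)"
proof -
  have "prob_space (P h (fst x) (snd x))" "sets (P h (fst x) (snd x)) = sets (SM SS)"
    using assms P_prob sets_P by auto
  then show "prob_space (step_kernel SS P \<pi> h x)" "sets (step_kernel SS P \<pi> h x) = sets (SAM SS)"
    unfolding step_eq using bind_prob_gen[OF _ _ act_meas act_probalg] assms by auto
qed

lemma int_step:
  fixes f :: "'s \<times> 'a \<Rightarrow> real"
  assumes h: "h \<in> {1..H}" "Suc h \<le> H" and s: "s \<in> SS"
    and f: "f \<in> borel_measurable (SAM SS)" "\<And>x. x \<in> space (SAM SS) \<Longrightarrow> \<bar>f x\<bar> \<le> B"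
  shows "(\<integral>x. f x \<partial>step_kernel SS P \<pi> h (s, a))
        = (\<integral>s'. (\<Sum>b\<in>UNIV. pmf (\<pi> (Suc h) s') b * f (s', b)) \<partial>P h s a)"
proof -
  have "(\<integral>x. f x \<partial>step_kernel SS P \<pi> h (s, a)) = (\<integral>s'. (\<integral>x. f x \<partial>act_kernel SS \<pi> (Suc h) s') \<partial>P h s a)"
    unfolding step_eq using h s
    by (auto intro!: int_bind_gen[OF _ _ act_meas f] P_prob sets_P)
  also have "\<dots> = (\<integral>s'. (\<Sum>b\<in>UNIV. pmf (\<pi> (Suc h) s') b * f (s', b)) \<partial>P h s a)"
    apply (rule Bochner_Integration.integral_cong[OF refl])
    apply (subst act_int)
    using sets_eq_imp_space_eq[OF sets_P[of h s a]] h s f by auto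
  finally show ?thesis .
qed

lemma occ_prob:
  assumes D: "prob_space D" "sets D = sets (SAM SS)" and h0: "1 \<le> h0" "h0 + n \<le> H"
  shows "prob_space (occ SS P \<pi> h0 D n) \<and> sets (occ SS P \<pi> h0 D n) = sets (SAM SS)"
  using h0
proof (induction n)
  case 0 then show ?case using D by simp
next
  case (Suc n)
  then have IH: "prob_space (occ SS P \<pi> h0 D n)" "sets (occ SS P \<pi> h0 D n) = sets (SAM SS)" by auto
  show ?case
    using bind_prob_gen[OF IH step_meas step_prob(1)] Suc.prems by simp
qed

lemma int_occ_Suc:
  fixes f :: "'s \<times> 'a \<Rightarrow> real"
  assumes D: "prob_space D" "sets D = sets (SAM SS)" and h0: "1 \<le> h0" "h0 + Suc n \<le> H"
    and f: "f \<in> borel_measurable (SAM SS)" "\<And>x. x \<in> space (SAM SS) \<Longrightarrow> \<bar>f x\<bar> \<le> B"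
  shows "(\<integral>x. f x \<partial>occ SS P \<pi> h0 D (Suc n))
       = (\<integral>x. (\<integral>y. f y \<partial>step_kernel SS P \<pi> (h0 + n) x) \<partial>occ SS P \<pi> h0 D n)"
proof -
  have IH: "prob_space (occ SS P \<pi> h0 D n)" "sets (occ SS P \<pi> h0 D n) = sets (SAM SS)"
    using occ_prob[OF D, of h0 n] h0 by auto
  show ?thesis
    using int_bind_gen[OF IH step_meas f] h0 by simp
qed

lemma step_int_meas:
  fixes f :: "'s \<times> 'a \<Rightarrow> real"
  assumes "h \<in> {1..H}" "Suc h \<le> H" "f \<in> borel_measurable (SAM SS)"
  shows "(\<lambda>x. \<integral>y. f y \<partial>step_kernel SS P \<pi> h x) \<in> borel_measurable (SAM SS)"
  using measurable_compose[OF step_meas[OF assms(1,2)] integral_measurable_subprob_algebra[OF assms(3)]] by simp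

lemma step_int_bnd:
  fixes f :: "'s \<times> 'a \<Rightarrow> real"
  assumes "h \<in> {1..H}" "Suc h \<le> H" "f \<in> borel_measurable (SAM SS)"
    "\<And>x. x \<in> space (SAM SS) \<Longrightarrow> \<bar>f x\<bar> \<le> B" "x \<in> space (SAM SS)"
  shows "\<bar>\<integral>y. f y \<partial>step_kernel SS P \<pi> h x\<bar> \<le> B"
proof -
  have fb: "f y \<le> B" "-B \<le> f y" if "y \<in> space (SAM SS)" for y
    using assms(4)[OF that] by (auto simp: abs_le_iff)
  have "(\<integral>y. f y \<partial>step_kernel SS P \<pi> h x) \<le> B"
    by (rule int_le_gen[OF step_prob(1,2) assms(3,4)]) (use assms fb in auto)
  moreover have "-B \<le> (\<integral>y. f y \<partial>step_kernel SS P \<pi> h x)"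
    by (rule int_ge_gen[OF step_prob(1,2) assms(3,4)]) (use assms fb in auto)
  ultimately show ?thesis by auto
qed

end


context pol begin

lemma tel_ge:
  fixes U :: "nat \<Rightarrow> 's \<times> 'a \<Rightarrow> real"
  assumes D: "prob_space D" "sets D = sets (SAM SS)" and h0: "h0 \<in> {1..H}"
    and Um: "\<And>k. k \<in> {h0..H} \<Longrightarrow> U k \<in> borel_measurable (SAM SS)"
    and Ub: "\<And>k x. k \<in> {h0..H} \<Longrightarrow> x \<in> space (SAM SS) \<Longrightarrow> \<bar>U k x\<bar> \<le> B"
    and Ustep: "\<And>k x. k \<in> {h0..<H} \<Longrightarrow> x \<in> space (SAM SS) \<Longrightarrow>
        r k (fst x) (snd x) + (\<integral>y. U (Suc k) y \<partial>step_kernel SS P \<pi> k x) \<le> U k x"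
    and Ulast: "\<And>x. x \<in> space (SAM SS) \<Longrightarrow> r H (fst x) (snd x) \<le> U H x"
  shows "(\<Sum>k = h0..H. \<integral>x. r k (fst x) (snd x) \<partial>occ SS P \<pi> h0 D (k - h0)) \<le> (\<integral>x. U h0 x \<partial>D)"
proof -
  have rb: "\<And>k x. k \<in> {1..H} \<Longrightarrow> x \<in> space (SAM SS) \<Longrightarrow> \<bar>r k (fst x) (snd x)\<bar> \<le> 1"
    using r_abs by blast
  have main: "m \<le> H - h0 \<Longrightarrow> (\<Sum>k = H - m..H. \<integral>x. r k (fst x) (snd x) \<partial>occ SS P \<pi> h0 D (k - h0))
      \<le> (\<integral>x. U (H - m) x \<partial>occ SS P \<pi> h0 D (H - m - h0))" for m
  proof (induction m)
    case 0
    have O: "prob_space (occ SS P \<pi> h0 D (H - h0))" "sets (occ SS P \<pi> h0 D (H - h0)) = sets (SAM SS)"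
      using occ_prob[OF D, of h0 "H - h0"] h0 by auto
    show ?case
      using h0 by (simp, intro int_mono_gen[OF O r_meas rb Um Ub Ulast]) auto
  next
    case (Suc m)
    define k where "k = H - Suc m"
    have k: "k \<in> {h0..<H}" "Suc k = H - m" using Suc.prems h0 unfolding k_def by auto
    define n where "n = k - h0"
    have n: "h0 + n = k" "Suc n = H - m - h0" using k unfolding n_def by auto
    have O: "prob_space (occ SS P \<pi> h0 D n)" "sets (occ SS P \<pi> h0 D n) = sets (SAM SS)"
      using occ_prob[OF D, of h0 n] h0 n k by auto
    have kH: "k \<in> {1..H}" "Suc k \<le> H" using k h0 by auto
    have Uk1: "U (Suc k) \<in> borel_measurable (SAM SS)" "\<And>x. x \<in> space (SAM SS) \<Longrightarrow> \<bar>U (Suc k) x\<bar> \<le> B"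
      using Um Ub k by auto
    have sm: "(\<lambda>x. \<integral>y. U (Suc k) y \<partial>step_kernel SS P \<pi> k x) \<in> borel_measurable (SAM SS)"
      by (rule step_int_meas[OF kH Uk1(1)])
    have sb: "\<And>x. x \<in> space (SAM SS) \<Longrightarrow> \<bar>\<integral>y. U (Suc k) y \<partial>step_kernel SS P \<pi> k x\<bar> \<le> B"
      by (rule step_int_bnd[OF kH Uk1])
    have "(\<Sum>k' = H - Suc m..H. \<integral>x. r k' (fst x) (snd x) \<partial>occ SS P \<pi> h0 D (k' - h0))
        = (\<integral>x. r k (fst x) (snd x) \<partial>occ SS P \<pi> h0 D n) + (\<Sum>k' = H - m..H. \<integral>x. r k' (fst x) (snd x) \<partial>occ SS P \<pi> h0 D (k' - h0))"
      unfolding k_def[symmetric] n_def using k by (subst sum.atLeast_Suc_atMost) auto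
    also have "\<dots> \<le> (\<integral>x. r k (fst x) (snd x) \<partial>occ SS P \<pi> h0 D n) + (\<integral>x. U (H - m) x \<partial>occ SS P \<pi> h0 D (H - m - h0))"
      using Suc by auto
    also have "(\<integral>x. U (H - m) x \<partial>occ SS P \<pi> h0 D (H - m - h0))
        = (\<integral>x. (\<integral>y. U (Suc k) y \<partial>step_kernel SS P \<pi> k x) \<partial>occ SS P \<pi> h0 D n)"
      unfolding n(2)[symmetric] k(2)[symmetric]
      using int_occ_Suc[OF D, of h0 n "U (Suc k)" B] h0 n kH Uk1 by auto
    also have "(\<integral>x. r k (fst x) (snd x) \<partial>occ SS P \<pi> h0 D n) + \<dots>
        = (\<integral>x. r k (fst x) (snd x) + (\<integral>y. U (Suc k) y \<partial>step_kernel SS P \<pi> k x) \<partial>occ SS P \<pi> h0 D n)"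
      by (rule Bochner_Integration.integral_add[symmetric])
         (auto intro!: integ_gen[OF O r_meas rb] integ_gen[OF O sm sb] kH)
    also have "\<dots> \<le> (\<integral>x. U k x \<partial>occ SS P \<pi> h0 D n)"
    proof (rule int_mono_gen[OF O _ _ Um Ub Ustep])
      show "(\<lambda>x. r k (fst x) (snd x) + (\<integral>y. U (Suc k) y \<partial>step_kernel SS P \<pi> k x)) \<in> borel_measurable (SAM SS)"
        using r_meas[OF kH(1)] sm by measurable
      show "\<bar>r k (fst x) (snd x) + (\<integral>y. U (Suc k) y \<partial>step_kernel SS P \<pi> k x)\<bar> \<le> 1 + B"
        if "x \<in> space (SAM SS)" for x
        using rb[OF kH(1) that] sb[OF that] by linarith
    qed (use k in auto)
    finally show ?case unfolding k_def n_def by simp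
  qed
  show ?thesis using main[of "H - h0"] h0 by simp
qed

lemma tel_le:
  fixes U :: "nat \<Rightarrow> 's \<times> 'a \<Rightarrow> real"
  assumes D: "prob_space D" "sets D = sets (SAM SS)" and h0: "h0 \<in> {1..H}"
    and Um: "\<And>k. k \<in> {h0..H} \<Longrightarrow> U k \<in> borel_measurable (SAM SS)"
    and Ub: "\<And>k x. k \<in> {h0..H} \<Longrightarrow> x \<in> space (SAM SS) \<Longrightarrow> \<bar>U k x\<bar> \<le> B"
    and Ustep: "\<And>k x. k \<in> {h0..<H} \<Longrightarrow> x \<in> space (SAM SS) \<Longrightarrow>
        U k x \<le> r k (fst x) (snd x) + (\<integral>y. U (Suc k) y \<partial>step_kernel SS P \<pi> k x)"
    and Ulast: "\<And>x. x \<in> space (SAM SS) \<Longrightarrow> U H x \<le> r H (fst x) (snd x)"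
  shows "(\<integral>x. U h0 x \<partial>D) \<le> (\<Sum>k = h0..H. \<integral>x. r k (fst x) (snd x) \<partial>occ SS P \<pi> h0 D (k - h0))"
proof -
  have rb: "\<And>k x. k \<in> {1..H} \<Longrightarrow> x \<in> space (SAM SS) \<Longrightarrow> \<bar>r k (fst x) (snd x)\<bar> \<le> 1"
    using r_abs by blast
  have main: "m \<le> H - h0 \<Longrightarrow> (\<integral>x. U (H - m) x \<partial>occ SS P \<pi> h0 D (H - m - h0))
      \<le> (\<Sum>k = H - m..H. \<integral>x. r k (fst x) (snd x) \<partial>occ SS P \<pi> h0 D (k - h0))" for m
  proof (induction m)
    case 0
    have O: "prob_space (occ SS P \<pi> h0 D (H - h0))" "sets (occ SS P \<pi> h0 D (H - h0)) = sets (SAM SS)"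
      using occ_prob[OF D, of h0 "H - h0"] h0 by auto
    show ?case
      using h0 by (simp, intro int_mono_gen[OF O Um Ub r_meas rb Ulast]) auto
  next
    case (Suc m)
    define k where "k = H - Suc m"
    have k: "k \<in> {h0..<H}" "Suc k = H - m" using Suc.prems h0 unfolding k_def by auto
    define n where "n = k - h0"
    have n: "h0 + n = k" "Suc n = H - m - h0" using k unfolding n_def by auto
    have O: "prob_space (occ SS P \<pi> h0 D n)" "sets (occ SS P \<pi> h0 D n) = sets (SAM SS)"
      using occ_prob[OF D, of h0 n] h0 n k by auto
    have kH: "k \<in> {1..H}" "Suc k \<le> H" using k h0 by auto
    have Uk1: "U (Suc k) \<in> borel_measurable (SAM SS)" "\<And>x. x \<in> space (SAM SS) \<Longrightarrow> \<bar>U (Suc k) x\<bar> \<le> B"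
      using Um Ub k by auto
    have sm: "(\<lambda>x. \<integral>y. U (Suc k) y \<partial>step_kernel SS P \<pi> k x) \<in> borel_measurable (SAM SS)"
      by (rule step_int_meas[OF kH Uk1(1)])
    have sb: "\<And>x. x \<in> space (SAM SS) \<Longrightarrow> \<bar>\<integral>y. U (Suc k) y \<partial>step_kernel SS P \<pi> k x\<bar> \<le> B"
      by (rule step_int_bnd[OF kH Uk1])
    have "(\<integral>x. U k x \<partial>occ SS P \<pi> h0 D n)
        \<le> (\<integral>x. r k (fst x) (snd x) + (\<integral>y. U (Suc k) y \<partial>step_kernel SS P \<pi> k x) \<partial>occ SS P \<pi> h0 D n)"
    proof (rule int_mono_gen[OF O Um Ub _ _ Ustep])
      show "(\<lambda>x. r k (fst x) (snd x) + (\<integral>y. U (Suc k) y \<partial>step_kernel SS P \<pi> k x)) \<in> borel_measurable (SAM SS)"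
        using r_meas[OF kH(1)] sm by measurable
      show "\<bar>r k (fst x) (snd x) + (\<integral>y. U (Suc k) y \<partial>step_kernel SS P \<pi> k x)\<bar> \<le> 1 + B"
        if "x \<in> space (SAM SS)" for x
        using rb[OF kH(1) that] sb[OF that] by linarith
    qed (use k in auto)
    also have "\<dots> = (\<integral>x. r k (fst x) (snd x) \<partial>occ SS P \<pi> h0 D n) +
         (\<integral>x. (\<integral>y. U (Suc k) y \<partial>step_kernel SS P \<pi> k x) \<partial>occ SS P \<pi> h0 D n)"
      by (rule Bochner_Integration.integral_add)
         (auto intro!: integ_gen[OF O r_meas rb] integ_gen[OF O sm sb] kH)
    also have "(\<integral>x. (\<integral>y. U (Suc k) y \<partial>step_kernel SS P \<pi> k x) \<partial>occ SS P \<pi> h0 D n)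
        = (\<integral>x. U (H - m) x \<partial>occ SS P \<pi> h0 D (H - m - h0))"
      unfolding n(2)[symmetric] k(2)[symmetric]
      using int_occ_Suc[OF D, of h0 n "U (Suc k)" B] h0 n kH Uk1 by auto
    also have "(\<integral>x. r k (fst x) (snd x) \<partial>occ SS P \<pi> h0 D n) + \<dots> \<le>
        (\<integral>x. r k (fst x) (snd x) \<partial>occ SS P \<pi> h0 D n) + (\<Sum>k' = H - m..H. \<integral>x. r k' (fst x) (snd x) \<partial>occ SS P \<pi> h0 D (k' - h0))"
      using Suc by auto
    also have "\<dots> = (\<Sum>k' = H - Suc m..H. \<integral>x. r k' (fst x) (snd x) \<partial>occ SS P \<pi> h0 D (k' - h0))"
      unfolding k_def[symmetric] n_def using k by (subst (2) sum.atLeast_Suc_atMost) auto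
    finally show ?case unfolding k_def n_def by simp
  qed
  show ?thesis using main[of "H - h0"] h0 by simp
qed

abbreviation "G h \<equiv> Gv SS P r \<pi> (Suc H - h) h"

lemma pmf_meas: "h \<in> {1..H} \<Longrightarrow> (\<lambda>s. pmf (\<pi> h s) b) \<in> borel_measurable (SM SS)"
  using pol by (auto simp: is_policy_def)

lemma Gv_props:
  "n + h = Suc H \<Longrightarrow> 1 \<le> h \<Longrightarrow> (\<lambda>x. Gv SS P r \<pi> n h (fst x) (snd x)) \<in> borel_measurable (SAM SS)
     \<and> (\<forall>s\<in>SS. \<forall>a. 0 \<le> Gv SS P r \<pi> n h s a \<and> Gv SS P r \<pi> n h s a \<le> real n)"
proof (induction n arbitrary: h)
  case 0 then show ?case by simp
next
  case (Suc n)
  have h: "h \<in> {1..H}" using Suc.prems by auto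
  show ?case
  proof (cases "n = 0")
    case True
    have eq: "\<And>s a. Gv SS P r \<pi> (Suc n) h s a = r h s a" using True by simp
    show ?thesis unfolding eq using r_meas[OF h] r_bnd[OF h] True by auto
  next
    case False
    then have h1: "Suc h \<in> {1..H}" using Suc.prems by auto
    from Suc have IH: "(\<lambda>x. Gv SS P r \<pi> n (Suc h) (fst x) (snd x)) \<in> borel_measurable (SAM SS)"
      "\<And>s a. s \<in> SS \<Longrightarrow> 0 \<le> Gv SS P r \<pi> n (Suc h) s a \<and> Gv SS P r \<pi> n (Suc h) s a \<le> real n"
      by auto
    have mm: "(\<lambda>s. \<Sum>b\<in>UNIV. pmf (\<pi> (Suc h) s) b * Gv SS P r \<pi> n (Suc h) s b) \<in> borel_measurable (SM SS)"
      by (rule avg_meas[OF IH(1) pmf_meas[OF h1]])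
    have mb: "0 \<le> (\<Sum>b\<in>UNIV. pmf (\<pi> (Suc h) s) b * Gv SS P r \<pi> n (Suc h) s b)
       \<and> (\<Sum>b\<in>UNIV. pmf (\<pi> (Suc h) s) b * Gv SS P r \<pi> n (Suc h) s b) \<le> real n"
      if "s \<in> SS" for s
      using pmf_avg_bnd[of 0 "Gv SS P r \<pi> n (Suc h) s" "real n"] IH(2)[OF that] by auto
    have "(\<lambda>x. r h (fst x) (snd x) + (\<integral>s'. (\<Sum>b\<in>UNIV. pmf (\<pi> (Suc h) s') b * Gv SS P r \<pi> n (Suc h) s' b) \<partial>P h (fst x) (snd x)))
        \<in> borel_measurable (SAM SS)"
      by (rule borel_measurable_add[OF r_meas[OF h] P_int_meas[OF h mm]])
    moreover have "0 \<le> Gv SS P r \<pi> (Suc n) h s a \<and> Gv SS P r \<pi> (Suc n) h s a \<le> real (Suc n)" if "s \<in> SS" for s a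
      using P_int_bnd[OF h that mm, of 0 "real n" a] mb r_bnd[OF h that, of a] by auto
    ultimately show ?thesis by simp
  qed
qed

lemma G_meas: "h \<in> {1..H} \<Longrightarrow> (\<lambda>x. G h (fst x) (snd x)) \<in> borel_measurable (SAM SS)"
  using Gv_props[of "Suc H - h" h] by auto

lemma G_bnd: "h \<in> {1..H} \<Longrightarrow> s \<in> SS \<Longrightarrow> 0 \<le> G h s a \<and> G h s a \<le> real (Suc H - h)"
  using Gv_props[of "Suc H - h" h] by auto

lemma G_abs: "k \<in> {1..H} \<Longrightarrow> x \<in> space (SAM SS) \<Longrightarrow> \<bar>G k (fst x) (snd x)\<bar> \<le> real H"
proof -
  assume k: "k \<in> {1..H}" and x: "x \<in> space (SAM SS)"
  then have "fst x \<in> SS" by auto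
  from G_bnd[OF k this, of "snd x"] have "0 \<le> G k (fst x) (snd x)" "G k (fst x) (snd x) \<le> real (Suc H - k)" by auto
  moreover have "real (Suc H - k) \<le> real H" using k by auto
  ultimately show ?thesis by linarith
qed

lemma W_abs: "k \<in> {1..H} \<Longrightarrow> x \<in> space (SAM SS) \<Longrightarrow> \<bar>W k (fst x) (snd x)\<bar> \<le> real H"
proof -
  assume k: "k \<in> {1..H}" and x: "x \<in> space (SAM SS)"
  then have "fst x \<in> SS" by auto
  from W_bnd[OF k this, of "snd x"] have "0 \<le> W k (fst x) (snd x)" "W k (fst x) (snd x) \<le> real (Suc H - k)" by auto
  moreover have "real (Suc H - k) \<le> real H" using k by auto
  ultimately show ?thesis by linarith
qed

lemma G_step:
  assumes h: "h \<in> {1..<H}" and x: "x \<in> space (SAM SS)"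
  shows "(\<integral>y. G (Suc h) (fst y) (snd y) \<partial>step_kernel SS P \<pi> h x) = G h (fst x) (snd x) - r h (fst x) (snd x)"
proof -
  obtain s a where x': "x = (s, a)" "s \<in> SS" using x by auto
  have h1: "h \<in> {1..H}" "Suc h \<le> H" "Suc h \<in> {1..H}" using h by auto
  have "(\<integral>y. G (Suc h) (fst y) (snd y) \<partial>step_kernel SS P \<pi> h (s, a))
     = (\<integral>s'. (\<Sum>b\<in>UNIV. pmf (\<pi> (Suc h) s') b * G (Suc h) s' b) \<partial>P h s a)"
    using int_step[OF h1(1,2) x'(2) G_meas[OF h1(3)] G_abs[OF h1(3)]] by simp
  also have "\<dots> = G h s a - r h s a"
    using h by (simp add: Suc_diff_le)
  finally show ?thesis using x' by simp
qed

lemma G_last: "G H s a = r H s a"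
  by simp

lemma W_step:
  assumes h: "h \<in> {1..<H}" and x: "x \<in> space (SAM SS)"
  shows "r h (fst x) (snd x) + (\<integral>y. W (Suc h) (fst y) (snd y) \<partial>step_kernel SS P \<pi> h x) \<le> W h (fst x) (snd x)"
proof -
  obtain s a where x': "x = (s, a)" "s \<in> SS" using x by auto
  have h1: "h \<in> {1..H}" "Suc h \<le> H" "Suc h \<in> {1..H}" using h by auto
  have "(\<integral>y. W (Suc h) (fst y) (snd y) \<partial>step_kernel SS P \<pi> h (s, a))
     = (\<integral>s'. (\<Sum>b\<in>UNIV. pmf (\<pi> (Suc h) s') b * W (Suc h) s' b) \<partial>P h s a)"
    using int_step[OF h1(1,2) x'(2) W_meas[OF h1(3)] W_abs[OF h1(3)]] by simp
  also have "\<dots> \<le> (\<integral>s'. Max (range (W (Suc h) s')) \<partial>P h s a)"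
  proof (rule int_mono_gen[OF P_prob[OF h1(1) x'(2)] sets_P[OF h1(1) x'(2)]])
    show "(\<lambda>s'. \<Sum>b\<in>UNIV. pmf (\<pi> (Suc h) s') b * W (Suc h) s' b) \<in> borel_measurable (SM SS)"
      by (rule avg_meas[OF W_meas[OF h1(3)] pmf_meas[OF h1(3)]])
    show "(\<lambda>s'. Max (range (W (Suc h) s'))) \<in> borel_measurable (SM SS)"
      by (rule Max_meas[OF W_meas[OF h1(3)]])
    fix y assume y: "y \<in> space (SM SS)"
    have wb: "\<And>b. 0 \<le> W (Suc h) y b \<and> W (Suc h) y b \<le> real H"
    proof -
      fix b
      have "0 \<le> W (Suc h) y b \<and> W (Suc h) y b \<le> real (Suc H - Suc h)"
        using W_bnd[OF h1(3), of y b] y by simp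
      moreover have "real (Suc H - Suc h) \<le> real H" by simp
      ultimately show "0 \<le> W (Suc h) y b \<and> W (Suc h) y b \<le> real H" by linarith
    qed
    show "\<bar>\<Sum>b\<in>UNIV. pmf (\<pi> (Suc h) y) b * W (Suc h) y b\<bar> \<le> real H"
      using pmf_avg_bnd[of 0 "W (Suc h) y" "real H"] wb by auto
    show "\<bar>Max (range (W (Suc h) y))\<bar> \<le> real H"
      using wb by (auto simp: Max_ge_iff Max_le_iff abs_le_iff)
    show "(\<Sum>b\<in>UNIV. pmf (\<pi> (Suc h) y) b * W (Suc h) y b) \<le> Max (range (W (Suc h) y))"
      by (rule pmf_avg_le_Max)
  qed
  also have "r h s a + \<dots> = W h s a"
    using h by (simp add: Suc_diff_le)
  finally show ?thesis using x' by simp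
qed

lemma W_last: "W H s a = r H s a"
  by simp

lemma init_prob:
  assumes "1 \<le> H"
  shows "prob_space (init_dist SS \<mu> \<pi>)" "sets (init_dist SS \<mu> \<pi>) = sets (SAM SS)"
  unfolding init_dist_def
  using bind_prob_gen[OF mu_prob sets_mu act_meas act_probalg] assms by auto

lemma int_init:
  fixes f :: "'s \<times> 'a \<Rightarrow> real"
  assumes "1 \<le> H" "f \<in> borel_measurable (SAM SS)" "\<And>x. x \<in> space (SAM SS) \<Longrightarrow> \<bar>f x\<bar> \<le> B"
  shows "(\<integral>x. f x \<partial>init_dist SS \<mu> \<pi>) = (\<integral>s. (\<Sum>b\<in>UNIV. pmf (\<pi> 1 s) b * f (s, b)) \<partial>\<mu>)"
proof -
  have "(\<integral>x. f x \<partial>init_dist SS \<mu> \<pi>) = (\<integral>s. (\<integral>x. f x \<partial>act_kernel SS \<pi> 1 s) \<partial>\<mu>)"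
    unfolding init_dist_def using assms by (intro int_bind_gen[OF mu_prob sets_mu act_meas assms(2,3)]) auto
  also have "\<dots> = (\<integral>s. (\<Sum>b\<in>UNIV. pmf (\<pi> 1 s) b * f (s, b)) \<partial>\<mu>)"
    by (rule int_cong_gen[OF sets_mu]) (use act_int assms in auto)
  finally show ?thesis .
qed

lemma traj_prob:
  assumes "h \<in> {1..H}"
  shows "prob_space (traj_law SS P \<mu> \<pi> h)" "sets (traj_law SS P \<mu> \<pi> h) = sets (SAM SS)"
  unfolding traj_law_def using occ_prob[OF init_prob, of 1 "h - 1"] assms by auto

lemma Qpi_W:
  assumes h: "h \<in> {1..H}" and s: "s \<in> SS"
  shows "Qpi SS H P r \<pi> h s a \<le> W h s a"
proof -
  have x: "(s, a) \<in> space (SAM SS)" using s by simp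
  have "Qpi SS H P r \<pi> h s a \<le> (\<integral>x. W h (fst x) (snd x) \<partial>return (SAM SS) (s, a))"
    unfolding Qpi_def
  proof (rule tel_ge[where U="\<lambda>k x. W k (fst x) (snd x)" and B="real H"])
    show "prob_space (return (SAM SS) (s, a))" by (rule prob_space_return[OF x])
  qed (use h W_meas W_abs W_step W_last in auto)
  also have "\<dots> = W h s a"
    using integral_return[OF x W_meas[OF h]] by simp
  finally show ?thesis .
qed

lemma Qpi_G:
  assumes h: "h \<in> {1..H}" and s: "s \<in> SS"
  shows "Qpi SS H P r \<pi> h s a = G h s a"
proof -
  have x: "(s, a) \<in> space (SAM SS)" using s by simp
  have R: "prob_space (return (SAM SS) (s, a))" by (rule prob_space_return[OF x])
  have "Qpi SS H P r \<pi> h s a \<le> (\<integral>x. G h (fst x) (snd x) \<partial>return (SAM SS) (s, a))"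
    unfolding Qpi_def
    by (rule tel_ge[where U="\<lambda>k x. G k (fst x) (snd x)" and B="real H", OF R])
       (use h G_meas G_abs G_step G_last in auto)
  moreover have "(\<integral>x. G h (fst x) (snd x) \<partial>return (SAM SS) (s, a)) \<le> Qpi SS H P r \<pi> h s a"
    unfolding Qpi_def
    by (rule tel_le[where U="\<lambda>k x. G k (fst x) (snd x)" and B="real H", OF R])
       (use h G_meas G_abs G_step G_last in auto)
  moreover have "(\<integral>x. G h (fst x) (snd x) \<partial>return (SAM SS) (s, a)) = G h s a"
    using integral_return[OF x G_meas[OF h]] by simp
  ultimately show ?thesis by linarith
qed

lemma J_G:
  assumes H: "1 \<le> H"
  shows "mdp_J SS H P r \<mu> \<pi> = (\<integral>s. (\<Sum>b\<in>UNIV. pmf (\<pi> 1 s) b * G 1 s b) \<partial>\<mu>)"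
proof -
  have h: "1 \<in> {1..H}" using H by auto
  have "mdp_J SS H P r \<mu> \<pi> \<le> (\<integral>x. G 1 (fst x) (snd x) \<partial>init_dist SS \<mu> \<pi>)"
    unfolding mdp_J_def traj_law_def
    by (rule tel_ge[where U="\<lambda>k x. G k (fst x) (snd x)" and B="real H", OF init_prob[OF H]])
       (use h G_meas G_abs G_step G_last in auto)
  moreover have "(\<integral>x. G 1 (fst x) (snd x) \<partial>init_dist SS \<mu> \<pi>) \<le> mdp_J SS H P r \<mu> \<pi>"
    unfolding mdp_J_def traj_law_def
    by (rule tel_le[where U="\<lambda>k x. G k (fst x) (snd x)" and B="real H", OF init_prob[OF H]])
       (use h G_meas G_abs G_step G_last in auto)
  moreover have "(\<integral>x. G 1 (fst x) (snd x) \<partial>init_dist SS \<mu> \<pi>) = (\<integral>s. (\<Sum>b\<in>UNIV. pmf (\<pi> 1 s) b * G 1 s b) \<partial>\<mu>)"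
    using int_init[OF H G_meas[OF h] G_abs[OF h]] by simp
  ultimately show ?thesis by linarith
qed

lemma J_W:
  assumes H: "1 \<le> H"
  shows "mdp_J SS H P r \<mu> \<pi> \<le> (\<integral>s. Max (range (W 1 s)) \<partial>\<mu>)"
proof -
  have h: "1 \<in> {1..H}" using H by auto
  have "mdp_J SS H P r \<mu> \<pi> \<le> (\<integral>x. W 1 (fst x) (snd x) \<partial>init_dist SS \<mu> \<pi>)"
    unfolding mdp_J_def traj_law_def
    by (rule tel_ge[where U="\<lambda>k x. W k (fst x) (snd x)" and B="real H", OF init_prob[OF H]])
       (use h W_meas W_abs W_step W_last in auto)
  also have "\<dots> = (\<integral>s. (\<Sum>b\<in>UNIV. pmf (\<pi> 1 s) b * W 1 s b) \<partial>\<mu>)"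
    using int_init[OF H W_meas[OF h] W_abs[OF h]] by simp
  also have "\<dots> \<le> (\<integral>s. Max (range (W 1 s)) \<partial>\<mu>)"
  proof (rule int_mono_gen[OF mu_prob sets_mu])
    show "(\<lambda>s'. \<Sum>b\<in>UNIV. pmf (\<pi> 1 s') b * W 1 s' b) \<in> borel_measurable (SM SS)"
      by (rule avg_meas[OF W_meas[OF h] pmf_meas[OF h]])
    show "(\<lambda>s'. Max (range (W 1 s'))) \<in> borel_measurable (SM SS)"
      by (rule Max_meas[OF W_meas[OF h]])
    fix y assume y: "y \<in> space (SM SS)"
    have wb: "\<And>b. 0 \<le> W 1 y b \<and> W 1 y b \<le> real H"
      using W_bnd[OF h, of y] y by simp
    show "\<bar>\<Sum>b\<in>UNIV. pmf (\<pi> 1 y) b * W 1 y b\<bar> \<le> real H"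
      using pmf_avg_bnd[of 0 "W 1 y" "real H"] wb by auto
    show "\<bar>Max (range (W 1 y))\<bar> \<le> real H"
      using wb by (auto simp: Max_ge_iff Max_le_iff abs_le_iff)
    show "(\<Sum>b\<in>UNIV. pmf (\<pi> 1 y) b * W 1 y b) \<le> Max (range (W 1 y))"
      by (rule pmf_avg_le_Max)
  qed
  finally show ?thesis .
qed

lemma W_step_eq:
  assumes h: "h \<in> {1..<H}" and x: "x \<in> space (SAM SS)"
    and opt: "\<And>s. s \<in> SS \<Longrightarrow> (\<Sum>b\<in>UNIV. pmf (\<pi> (Suc h) s) b * W (Suc h) s b) = Max (range (W (Suc h) s))"
  shows "W h (fst x) (snd x) \<le> r h (fst x) (snd x) + (\<integral>y. W (Suc h) (fst y) (snd y) \<partial>step_kernel SS P \<pi> h x)"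
proof -
  obtain s a where x': "x = (s, a)" "s \<in> SS" using x by auto
  have h1: "h \<in> {1..H}" "Suc h \<le> H" "Suc h \<in> {1..H}" using h by auto
  have "(\<integral>y. W (Suc h) (fst y) (snd y) \<partial>step_kernel SS P \<pi> h (s, a))
     = (\<integral>s'. (\<Sum>b\<in>UNIV. pmf (\<pi> (Suc h) s') b * W (Suc h) s' b) \<partial>P h s a)"
    using int_step[OF h1(1,2) x'(2) W_meas[OF h1(3)] W_abs[OF h1(3)]] by simp
  also have "\<dots> = (\<integral>s'. Max (range (W (Suc h) s')) \<partial>P h s a)"
    by (rule int_cong_gen[OF sets_P[OF h1(1) x'(2)]]) (use opt in auto)
  also have "r h s a + \<dots> = W h s a"
    using h by (simp add: Suc_diff_le)
  finally show ?thesis using x' by simp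
qed

lemma Qpi_W_eq:
  assumes h: "h \<in> {1..H}" and s: "s \<in> SS"
    and opt: "\<And>k s. k \<in> {2..H} \<Longrightarrow> s \<in> SS \<Longrightarrow> (\<Sum>b\<in>UNIV. pmf (\<pi> k s) b * W k s b) = Max (range (W k s))"
  shows "Qpi SS H P r \<pi> h s a = W h s a"
proof -
  have x: "(s, a) \<in> space (SAM SS)" using s by simp
  have R: "prob_space (return (SAM SS) (s, a))" by (rule prob_space_return[OF x])
  have "(\<integral>x. W h (fst x) (snd x) \<partial>return (SAM SS) (s, a)) \<le> Qpi SS H P r \<pi> h s a"
    unfolding Qpi_def
  proof (rule tel_le[where U="\<lambda>k x. W k (fst x) (snd x)" and B="real H", OF R])
    fix k :: nat and x :: "'s \<times> 'a" assume k: "k \<in> {h..<H}" and x: "x \<in> space (SAM SS)"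
    show "W k (fst x) (snd x) \<le> r k (fst x) (snd x) + (\<integral>y. W (Suc k) (fst y) (snd y) \<partial>step_kernel SS P \<pi> k x)"
    proof (rule W_step_eq[OF _ x])
      show "k \<in> {1..<H}" using k h by auto
      fix s assume "s \<in> SS"
      then show "(\<Sum>b\<in>UNIV. pmf (\<pi> (Suc k) s) b * W (Suc k) s b) = Max (range (W (Suc k) s))"
        by (intro opt) (use k h in auto)
    qed
  qed (use h W_meas W_abs W_last in auto)
  moreover have "(\<integral>x. W h (fst x) (snd x) \<partial>return (SAM SS) (s, a)) = W h s a"
    using integral_return[OF x W_meas[OF h]] by simp
  ultimately show ?thesis using Qpi_W[OF h s, of a] by linarith
qed

end

context mdp begin

lemma polI: "is_policy SS H \<pi> \<Longrightarrow> pol SS H P r \<mu> \<pi>"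
  by (simp add: pol_def pol_axioms_def mdp_axioms)

definition gp :: "nat \<Rightarrow> 's \<Rightarrow> 'a pmf" where
  "gp h s = pmf_of_set {b. W h s b = Max (range (W h s))}"

lemma gp_set: "{b. W h s b = Max (range (W h s))} \<noteq> {}"
proof -
  have "Max (range (W h s)) \<in> range (W h s)" by (rule Max_in) auto
  then obtain b where "Max (range (W h s)) = W h s b" by (rule imageE)
  then have "b \<in> {b. W h s b = Max (range (W h s))}" by simp
  then show ?thesis by blast
qed

lemma pmf_gp: "pmf (gp h s) b = (if W h s b = Max (range (W h s)) then 1 else 0)
    / (\<Sum>c\<in>UNIV. if W h s c = Max (range (W h s)) then 1 else 0)"
  unfolding gp_def using gp_set[of h s] by (simp add: sum.If_cases indicator_def)

lemma gp_opt: "(\<Sum>b\<in>UNIV. pmf (gp h s) b * W h s b) = Max (range (W h s))"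
proof -
  define S where "S = {b. W h s b = Max (range (W h s))}"
  have S: "S \<noteq> {}" "finite S" unfolding S_def using gp_set by auto
  have "(\<Sum>b\<in>UNIV. pmf (gp h s) b * W h s b) = (\<Sum>b\<in>UNIV. indicator S b / card S * W h s b)"
    unfolding gp_def S_def[symmetric] using S by simp
  also have "\<dots> = (\<Sum>b\<in>S. Max (range (W h s)) / card S)"
    by (rule sum.mono_neutral_cong_right) (auto simp: S_def indicator_def)
  also have "\<dots> = Max (range (W h s))"
    using S by simp
  finally show ?thesis .
qed

lemma gp_policy: "is_policy SS H gp"
  unfolding is_policy_def
proof (intro ballI allI)
  fix h b assume h: "h \<in> {1..H}"
  have sl: "\<And>c. (\<lambda>s. W h s c) \<in> borel_measurable (SM SS)"
    using meas_slice[OF W_meas[OF h]] by simp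
  have mx: "(\<lambda>s. Max (range (W h s))) \<in> borel_measurable (SM SS)"
    by (rule Max_meas[OF W_meas[OF h]])
  have "(\<lambda>s. (if W h s b = Max (range (W h s)) then 1 else 0)
    / (\<Sum>c\<in>UNIV. if W h s c = Max (range (W h s)) then 1 else (0::real))) \<in> borel_measurable (SM SS)"
    using sl mx by measurable
  then show "(\<lambda>s. pmf (gp h s) b) \<in> borel_measurable (SM SS)"
    by (simp add: pmf_gp)
qed

lemma Qstar_W:
  assumes h: "h \<in> {1..H}" and s: "s \<in> SS"
  shows "Qstar SS H P r h s a = W h s a"
  unfolding Qstar_def
proof (rule cSup_eq_maximum)
  show "W h s a \<in> (\<lambda>\<pi>. Qpi SS H P r \<pi> h s a) ` {\<pi>. is_policy SS H \<pi>}"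
  proof
    show "W h s a = Qpi SS H P r gp h s a"
    proof -
      have "Qpi SS H P r gp h s a = W h s a"
        by (rule pol.Qpi_W_eq[OF polI[OF gp_policy] h s]) (rule gp_opt)
      then show ?thesis by simp
    qed
  qed (use gp_policy in simp)
  fix x assume "x \<in> (\<lambda>\<pi>. Qpi SS H P r \<pi> h s a) ` {\<pi>. is_policy SS H \<pi>}"
  then obtain \<pi> where p: "is_policy SS H \<pi>" and x: "x = Qpi SS H P r \<pi> h s a" by (rule imageE) simp
  show "x \<le> W h s a"
    unfolding x by (rule pol.Qpi_W[OF polI[OF p] h s])
qed

lemma Jstar_le:
  assumes H: "1 \<le> H"
  shows "mdp_Jstar SS H P r \<mu> \<le> (\<integral>s. Max (range (W 1 s)) \<partial>\<mu>)"
  unfolding mdp_Jstar_def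
proof (rule cSUP_least)
  have "gp \<in> {\<pi>. is_policy SS H \<pi>}" using gp_policy by simp
  then show "{\<pi> :: nat \<Rightarrow> 's \<Rightarrow> 'a pmf. is_policy SS H \<pi>} \<noteq> {}" by (metis empty_iff)
  fix \<pi> :: "nat \<Rightarrow> 's \<Rightarrow> 'a pmf" assume "\<pi> \<in> {\<pi>. is_policy SS H \<pi>}"
  then have p: "is_policy SS H \<pi>" by simp
  show "mdp_J SS H P r \<mu> \<pi> \<le> (\<integral>s. Max (range (W 1 s)) \<partial>\<mu>)"
    by (rule pol.J_W[OF polI[OF p] H])
qed

lemma J_le_Jstar:
  assumes H: "1 \<le> H" and pol: "is_policy SS H \<pi>"
  shows "mdp_J SS H P r \<mu> \<pi> \<le> mdp_Jstar SS H P r \<mu>"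
  unfolding mdp_Jstar_def
proof (rule cSUP_upper)
  show "\<pi> \<in> {\<pi>. is_policy SS H \<pi>}" using pol by simp
  show "bdd_above ((\<lambda>\<pi>. mdp_J SS H P r \<mu> \<pi>) ` {\<pi>. is_policy SS H \<pi>})"
  proof (rule bdd_aboveI[where M="\<integral>s. Max (range (W 1 s)) \<partial>\<mu>"])
    fix x assume "x \<in> (\<lambda>\<pi>. mdp_J SS H P r \<mu> \<pi>) ` {\<pi>. is_policy SS H \<pi>}"
    then obtain \<pi>' where p: "is_policy SS H \<pi>'" and x: "x = mdp_J SS H P r \<mu> \<pi>'" by (rule imageE) simp
    show "x \<le> (\<integral>s. Max (range (W 1 s)) \<partial>\<mu>)"
      unfolding x by (rule pol.J_W[OF polI[OF p] H])
  qed
qed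

end


definition sm :: "real \<Rightarrow> ('a::finite \<Rightarrow> real) \<Rightarrow> 'a \<Rightarrow> real" where
  "sm \<beta> x a = exp (\<beta> * x a) / (\<Sum>b\<in>UNIV. exp (\<beta> * x b))"

lemma sm_Z_pos: "0 < (\<Sum>b\<in>(UNIV::'a::finite set). exp ((\<beta>::real) * x b))"
proof -
  have "exp (\<beta> * x undefined) \<le> (\<Sum>b\<in>UNIV. exp (\<beta> * x b))" by (rule member_le_sum) auto
  then show ?thesis by (metis exp_gt_zero less_le_trans)
qed

lemma sm_pos: "0 < sm \<beta> x a"
  unfolding sm_def using sm_Z_pos by (intro divide_pos_pos) auto

lemma sm_sum: "(\<Sum>a\<in>UNIV. sm \<beta> x a) = 1"
  unfolding sm_def using sm_Z_pos[of \<beta> x] by (simp add: sum_divide_distrib[symmetric])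

lemma pmf_softmax: "pmf (softmax_policy \<beta> Q h s) a = sm \<beta> (Q h s) a"
  unfolding softmax_policy_def
proof (subst pmf_embed_pmf)
  show "\<And>x. 0 \<le> exp (\<beta> * Q h s x) / (\<Sum>a'\<in>UNIV. exp (\<beta> * Q h s a'))"
    using sm_pos[of \<beta> "Q h s"] by (simp add: sm_def less_imp_le)
  show "(\<integral>\<^sup>+ x. ennreal (exp (\<beta> * Q h s x) / (\<Sum>a'\<in>UNIV. exp (\<beta> * Q h s a'))) \<partial>count_space UNIV) = 1"
  proof -
    have "(\<Sum>a\<in>UNIV. ennreal (sm \<beta> (Q h s) a)) = ennreal (\<Sum>a\<in>UNIV. sm \<beta> (Q h s) a)"
      by (rule sum_ennreal) (simp add: sm_pos less_imp_le)
    then show ?thesis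
      by (subst nn_integral_count_space_finite) (simp_all add: sm_sum[of \<beta> "Q h s", unfolded sm_def] sm_def)
  qed
qed (simp add: sm_def)

lemma entropy_le:
  fixes p :: "'a::finite \<Rightarrow> real"
  assumes pos: "\<And>a. 0 < p a" and s1: "(\<Sum>a\<in>UNIV. p a) = 1"
  shows "- (\<Sum>a\<in>UNIV. p a * ln (p a)) \<le> ln (real CARD('a))"
proof -
  define n where "n = real CARD('a)"
  have n: "0 < n" unfolding n_def by simp
  have "(\<Sum>a\<in>UNIV. p a * ln (1 / (n * p a))) \<le> (\<Sum>a\<in>UNIV. p a * (1 / (n * p a) - 1))"
  proof (rule sum_mono)
    fix a
    have "ln (1 / (n * p a)) \<le> 1 / (n * p a) - 1"
      by (rule ln_le_minus_one) (use n pos[of a] in simp)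
    then show "p a * ln (1 / (n * p a)) \<le> p a * (1 / (n * p a) - 1)"
      using pos[of a] by (simp add: mult_left_mono)
  qed
  also have "\<dots> = (\<Sum>a\<in>UNIV. 1 / n - p a)"
  proof (rule sum.cong)
    fix a show "p a * (1 / (n * p a) - 1) = 1 / n - p a"
      using pos[of a] n by (simp add: field_simps)
  qed simp
  also have "\<dots> = 0"
    using n s1 by (simp add: sum_subtractf n_def)
  finally have le0: "(\<Sum>a\<in>UNIV. p a * ln (1 / (n * p a))) \<le> 0" .
  have "(\<Sum>a\<in>UNIV. p a * ln (1 / (n * p a))) = (\<Sum>a\<in>UNIV. - (p a * ln (p a)) - p a * ln n)"
  proof (rule sum.cong)
    fix a show "p a * ln (1 / (n * p a)) = - (p a * ln (p a)) - p a * ln n"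
      using pos[of a] n by (simp add: ln_div ln_mult field_simps)
  qed simp
  also have "\<dots> = - (\<Sum>a\<in>UNIV. p a * ln (p a)) - ln n"
    using s1 by (simp add: sum_subtractf sum_negf sum_distrib_right[symmetric])
  finally show ?thesis using le0 unfolding n_def by linarith
qed

lemma softmax_gap:
  fixes x :: "'a::finite \<Rightarrow> real"
  assumes b: "0 < \<beta>"
  shows "Max (range x) - (\<Sum>a\<in>UNIV. sm \<beta> x a * x a) \<le> ln (real CARD('a)) / \<beta>"
proof -
  define Z where "Z = (\<Sum>b\<in>UNIV. exp (\<beta> * x b))"
  have Z: "0 < Z" unfolding Z_def by (rule sm_Z_pos)
  have lnsm: "ln (sm \<beta> x a) = \<beta> * x a - ln Z" for a
    unfolding sm_def Z_def[symmetric] using Z by (simp add: ln_div)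
  have xa: "x a = (ln (sm \<beta> x a) + ln Z) / \<beta>" for a
    using lnsm[of a] b by (simp add: field_simps)
  have "(\<Sum>a\<in>UNIV. sm \<beta> x a * x a) = (\<Sum>a\<in>UNIV. sm \<beta> x a * ln (sm \<beta> x a) + sm \<beta> x a * ln Z) / \<beta>"
    by (subst sum_divide_distrib) (rule sum.cong, simp, subst xa, simp add: field_simps)
  also have "\<dots> = ((\<Sum>a\<in>UNIV. sm \<beta> x a * ln (sm \<beta> x a)) + ln Z) / \<beta>"
    by (simp add: sum.distrib sum_distrib_right[symmetric] sm_sum)
  finally have E: "(\<Sum>a\<in>UNIV. sm \<beta> x a * x a) = ((\<Sum>a\<in>UNIV. sm \<beta> x a * ln (sm \<beta> x a)) + ln Z) / \<beta>" .
  have "Max (range x) \<in> range x" by (rule Max_in) auto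
  then obtain a0 where a0: "Max (range x) = x a0" by (rule imageE)
  have "exp (\<beta> * x a0) \<le> Z"
    unfolding Z_def by (rule member_le_sum) auto
  then have "ln (exp (\<beta> * x a0)) \<le> ln Z"
    using Z by (subst ln_le_cancel_iff) auto
  then have "\<beta> * x a0 \<le> ln Z" by simp
  then have M: "Max (range x) \<le> ln Z / \<beta>"
    using b a0 by (simp add: field_simps)
  have H: "- (\<Sum>a\<in>UNIV. sm \<beta> x a * ln (sm \<beta> x a)) \<le> ln (real CARD('a))"
    by (rule entropy_le) (auto simp: sm_pos sm_sum)
  have "Max (range x) - (\<Sum>a\<in>UNIV. sm \<beta> x a * x a) \<le> ln Z / \<beta> - ((\<Sum>a\<in>UNIV. sm \<beta> x a * ln (sm \<beta> x a)) + ln Z) / \<beta>"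
    using M E by linarith
  also have "\<dots> = - (\<Sum>a\<in>UNIV. sm \<beta> x a * ln (sm \<beta> x a)) / \<beta>"
    using b by (simp add: field_simps)
  also have "\<dots> \<le> ln (real CARD('a)) / \<beta>"
    using divide_right_mono[OF H, of \<beta>] b by simp
  finally show ?thesis .
qed

lemma softmax_ratio:
  fixes x y :: "'a::finite \<Rightarrow> real"
  assumes b: "0 < \<beta>" and d: "\<And>a. \<bar>x a - y a\<bar> \<le> \<delta>"
  shows "exp (- (2 * \<beta> * \<delta>)) * sm \<beta> x a \<le> sm \<beta> y a"
proof -
  define Zx where "Zx = (\<Sum>b\<in>UNIV. exp (\<beta> * x b))"
  define Zy where "Zy = (\<Sum>b\<in>UNIV. exp (\<beta> * y b))"
  have Zx: "0 < Zx" unfolding Zx_def by (rule sm_Z_pos)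
  have Zy: "0 < Zy" unfolding Zy_def by (rule sm_Z_pos)
  have e1: "exp (\<beta> * x a) * exp (- (\<beta> * \<delta>)) \<le> exp (\<beta> * y a)"
  proof -
    have "\<beta> * (x a - y a) \<le> \<beta> * \<delta>"
      using d[of a] b by (intro mult_left_mono) (auto simp: abs_le_iff)
    then have "\<beta> * x a - \<beta> * \<delta> \<le> \<beta> * y a" by (simp add: algebra_simps)
    then show ?thesis by (simp add: exp_add[symmetric])
  qed
  have e2: "Zy \<le> exp (\<beta> * \<delta>) * Zx"
    unfolding Zx_def Zy_def sum_distrib_left
  proof (rule sum_mono)
    fix c
    have "\<beta> * (y c - x c) \<le> \<beta> * \<delta>"
      using d[of c] b by (intro mult_left_mono) (auto simp: abs_le_iff)
    then have "\<beta> * y c \<le> \<beta> * \<delta> + \<beta> * x c" by (simp add: algebra_simps)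
    then show "exp (\<beta> * y c) \<le> exp (\<beta> * \<delta>) * exp (\<beta> * x c)"
      by (simp add: exp_add[symmetric])
  qed
  have "exp (- (2 * \<beta> * \<delta>)) * sm \<beta> x a = (exp (\<beta> * x a) * exp (- (\<beta> * \<delta>))) / (exp (\<beta> * \<delta>) * Zx)"
    unfolding sm_def Zx_def[symmetric]
    by (simp add: field_simps exp_add[symmetric] exp_diff)
  also have "\<dots> \<le> exp (\<beta> * y a) / Zy"
    using e1 e2 Zx Zy by (intro frac_le) auto
  finally show ?thesis unfolding sm_def Zy_def .
qed

lemma softmax_tv:
  fixes x y g :: "'a::finite \<Rightarrow> real"
  assumes b: "0 < \<beta>" and g: "\<And>a. 0 \<le> g a" "\<And>a. g a \<le> C"
  shows "(\<Sum>a\<in>UNIV. (sm \<beta> x a - sm \<beta> y a) * g a) \<le> C * (2 * \<beta> * Max (range (\<lambda>a. \<bar>x a - y a\<bar>)))"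
proof -
  define \<delta> where "\<delta> = Max (range (\<lambda>a. \<bar>x a - y a\<bar>))"
  have d: "\<And>a. \<bar>x a - y a\<bar> \<le> \<delta>" unfolding \<delta>_def by (rule Max_ge) auto
  have d0: "0 \<le> \<delta>" using d[of undefined] by linarith
  define t where "t = 2 * \<beta> * \<delta>"
  have t0: "0 \<le> t" unfolding t_def using b d0 by simp
  have C0: "0 \<le> C" using g[of undefined] by linarith
  define p where "p = sm \<beta> x"
  define q where "q = sm \<beta> y"
  have pq: "exp (- t) * p a \<le> q a" for a
    unfolding p_def q_def t_def by (rule softmax_ratio[OF b d])
  have p0: "0 \<le> p a" for a unfolding p_def using sm_pos less_imp_le by blast
  have et: "exp (- t) \<le> 1" using t0 by simp
  have "(\<Sum>a\<in>UNIV. (p a - q a) * g a) \<le> (\<Sum>a\<in>UNIV. (p a - min (p a) (q a)) * C)"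
  proof (rule sum_mono)
    fix a show "(p a - q a) * g a \<le> (p a - min (p a) (q a)) * C"
    proof (cases "q a \<le> p a")
      case True then show ?thesis using g[of a] by (simp add: mult_left_mono)
    next
      case False then show ?thesis using g[of a] by (simp add: mult_nonpos_nonneg)
    qed
  qed
  also have "\<dots> \<le> (\<Sum>a\<in>UNIV. (p a - exp (- t) * p a) * C)"
  proof (rule sum_mono)
    fix a
    have "exp (- t) * p a \<le> min (p a) (q a)"
      using pq[of a] et p0[of a] by (simp add: mult_left_le_one_le)
    then show "(p a - min (p a) (q a)) * C \<le> (p a - exp (- t) * p a) * C"
      using C0 by (intro mult_right_mono) auto
  qed
  also have "\<dots> = (1 - exp (- t)) * C"
    using sm_sum[of \<beta> x] unfolding p_def
    by (simp add: sum_distrib_right[symmetric] sum_subtractf sum_distrib_left[symmetric] algebra_simps)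
  also have "\<dots> \<le> t * C"
  proof (rule mult_right_mono[OF _ C0])
    show "1 - exp (- t) \<le> t" using exp_ge_add_one_self[of "- t"] by linarith
  qed
  finally show ?thesis unfolding p_def q_def t_def \<delta>_def by (simp add: algebra_simps)
qed


context pol begin

lemma avg_meas_SAM:
  fixes F :: "'s \<Rightarrow> 'a \<Rightarrow> real"
  assumes "(\<lambda>x. F (fst x) (snd x)) \<in> borel_measurable (SAM SS)" "h \<in> {1..H}"
  shows "(\<lambda>x. \<Sum>b\<in>UNIV. pmf (\<pi> h (fst x)) b * F (fst x) b) \<in> borel_measurable (SAM SS)"
proof -
  have "(\<lambda>s. \<Sum>b\<in>UNIV. pmf (\<pi> h s) b * F s b) \<in> borel_measurable (SM SS)"
    by (rule avg_meas[OF assms(1) pmf_meas[OF assms(2)]])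
  from measurable_compose[OF _ this, of fst "SAM SS"] show ?thesis
    unfolding SAM_def by simp
qed

lemma fst_meas:
  fixes g :: "'s \<Rightarrow> real"
  assumes "g \<in> borel_measurable (SM SS)"
  shows "(\<lambda>x. g (fst x)) \<in> borel_measurable (SAM SS)"
  using measurable_compose[OF _ assms, of fst "SAM SS"] unfolding SAM_def by simp

lemma traj_cong:
  fixes f g :: "'s \<times> 'a \<Rightarrow> real"
  assumes h: "h \<in> {1..H}"
    and f: "f \<in> borel_measurable (SAM SS)" "\<And>x. x \<in> space (SAM SS) \<Longrightarrow> \<bar>f x\<bar> \<le> B"
    and g: "g \<in> borel_measurable (SAM SS)" "\<And>x. x \<in> space (SAM SS) \<Longrightarrow> \<bar>g x\<bar> \<le> B"
    and eq: "\<And>s. s \<in> SS \<Longrightarrow> (\<Sum>b\<in>UNIV. pmf (\<pi> h s) b * f (s, b)) = (\<Sum>b\<in>UNIV. pmf (\<pi> h s) b * g (s, b))"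
  shows "(\<integral>x. f x \<partial>traj_law SS P \<mu> \<pi> h) = (\<integral>x. g x \<partial>traj_law SS P \<mu> \<pi> h)"
proof (cases "h = 1")
  case True
  have H: "1 \<le> H" using h by auto
  have "(\<integral>x. f x \<partial>traj_law SS P \<mu> \<pi> h) = (\<integral>s. (\<Sum>b\<in>UNIV. pmf (\<pi> 1 s) b * f (s, b)) \<partial>\<mu>)"
    unfolding traj_law_def True using int_init[OF H f] by simp
  also have "\<dots> = (\<integral>s. (\<Sum>b\<in>UNIV. pmf (\<pi> 1 s) b * g (s, b)) \<partial>\<mu>)"
    by (rule int_cong_gen[OF sets_mu]) (use eq True in auto)
  also have "\<dots> = (\<integral>x. g x \<partial>traj_law SS P \<mu> \<pi> h)"
    unfolding traj_law_def True using int_init[OF H g] by simp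
  finally show ?thesis .
next
  case False
  define n where "n = h - 2"
  have n: "h - 1 = Suc n" "1 + n = h - 1" "Suc (h - 1) = h" using h False unfolding n_def by auto
  have H: "1 \<le> H" using h by auto
  have hh: "h - 1 \<in> {1..H}" "Suc (h - 1) \<le> H" using h False by auto
  have D: "prob_space (init_dist SS \<mu> \<pi>)" "sets (init_dist SS \<mu> \<pi>) = sets (SAM SS)"
    using init_prob[OF H] by auto
  have O: "prob_space (occ SS P \<pi> 1 (init_dist SS \<mu> \<pi>) n)" "sets (occ SS P \<pi> 1 (init_dist SS \<mu> \<pi>) n) = sets (SAM SS)"
    using occ_prob[OF D, of 1 n] h n by auto
  have step_eq: "(\<integral>y. f y \<partial>step_kernel SS P \<pi> (h - 1) x) = (\<integral>y. g y \<partial>step_kernel SS P \<pi> (h - 1) x)"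
    if x: "x \<in> space (SAM SS)" for x
  proof -
    obtain s a where x': "x = (s, a)" "s \<in> SS" using x by auto
    have "(\<integral>y. f y \<partial>step_kernel SS P \<pi> (h - 1) (s, a)) = (\<integral>s'. (\<Sum>b\<in>UNIV. pmf (\<pi> (Suc (h - 1)) s') b * f (s', b)) \<partial>P (h - 1) s a)"
      by (rule int_step[OF hh x'(2) f])
    also have "\<dots> = (\<integral>s'. (\<Sum>b\<in>UNIV. pmf (\<pi> (Suc (h - 1)) s') b * g (s', b)) \<partial>P (h - 1) s a)"
      by (rule int_cong_gen[OF sets_P[OF hh(1) x'(2)]]) (use eq n in auto)
    also have "\<dots> = (\<integral>y. g y \<partial>step_kernel SS P \<pi> (h - 1) (s, a))"
      by (rule int_step[OF hh x'(2) g, symmetric])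
    finally show ?thesis using x' by simp
  qed
  have "(\<integral>x. f x \<partial>traj_law SS P \<mu> \<pi> h) = (\<integral>x. (\<integral>y. f y \<partial>step_kernel SS P \<pi> (1 + n) x) \<partial>occ SS P \<pi> 1 (init_dist SS \<mu> \<pi>) n)"
    unfolding traj_law_def n(1) by (rule int_occ_Suc[OF D _ _ f]) (use h n in auto)
  also have "\<dots> = (\<integral>x. (\<integral>y. g y \<partial>step_kernel SS P \<pi> (1 + n) x) \<partial>occ SS P \<pi> 1 (init_dist SS \<mu> \<pi>) n)"
    by (rule int_cong_gen[OF O(2)]) (use step_eq n in auto)
  also have "\<dots> = (\<integral>x. g x \<partial>traj_law SS P \<mu> \<pi> h)"
    unfolding traj_law_def n(1) by (rule int_occ_Suc[OF D _ _ g, symmetric]) (use h n in auto)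
  finally show ?thesis .
qed

lemma traj_avg:
  fixes \<phi> :: "'s \<Rightarrow> 'a \<Rightarrow> real"
  assumes h: "h \<in> {1..H}"
    and f: "(\<lambda>x. \<phi> (fst x) (snd x)) \<in> borel_measurable (SAM SS)" "\<And>s a. s \<in> SS \<Longrightarrow> \<bar>\<phi> s a\<bar> \<le> B"
  shows "(\<integral>x. (\<Sum>b\<in>UNIV. pmf (\<pi> h (fst x)) b * \<phi> (fst x) b) \<partial>traj_law SS P \<mu> \<pi> h) = (\<integral>x. \<phi> (fst x) (snd x) \<partial>traj_law SS P \<mu> \<pi> h)"
proof (rule traj_cong[OF h avg_meas_SAM[OF f(1) h] _ f(1)])
  fix x :: "'s \<times> 'a" assume x: "x \<in> space (SAM SS)"
  then have fx: "fst x \<in> SS" by auto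
  have lo: "-B \<le> \<phi> (fst x) b" and hi: "\<phi> (fst x) b \<le> B" for b
    using f(2)[OF fx, of b] by (simp_all add: abs_le_iff)
  show "\<bar>\<Sum>b\<in>UNIV. pmf (\<pi> h (fst x)) b * \<phi> (fst x) b\<bar> \<le> B"
    using pmf_avg_bnd[of "-B" "\<phi> (fst x)" B "\<pi> h (fst x)", OF lo hi] by (auto simp: abs_le_iff)
  show "\<bar>\<phi> (fst x) (snd x)\<bar> \<le> B" using f(2) x by auto
next
  fix s assume "s \<in> SS"
  show "(\<Sum>c\<in>UNIV. pmf (\<pi> h s) c * (\<Sum>b\<in>UNIV. pmf (\<pi> h (fst (s, c))) b * \<phi> (fst (s, c)) b)) =
        (\<Sum>c\<in>UNIV. pmf (\<pi> h s) c * \<phi> (fst (s, c)) (snd (s, c)))"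
    by (simp add: sum_distrib_right[symmetric] sum_pmf_eq_1)
qed

end

locale main = mdp SS H P r \<mu> for SS :: "'s::euclidean_space set" and H :: nat
    and P :: "nat \<Rightarrow> 's \<Rightarrow> 'a::finite \<Rightarrow> 's measure"
    and r :: "nat \<Rightarrow> 's \<Rightarrow> 'a \<Rightarrow> real" and \<mu> :: "'s measure" +
  fixes \<beta> :: real and Q :: "nat \<Rightarrow> 's \<Rightarrow> 'a \<Rightarrow> real"
  assumes beta: "\<beta> > 0"
    and Qcont: "\<forall>h\<in>{1..H}. \<forall>a. continuous_on SS (\<lambda>s. Q h s a)"
begin

lemma Q_slice: "h \<in> {1..H} \<Longrightarrow> (\<lambda>s. Q h s a) \<in> borel_measurable (SM SS)"
  using Qcont unfolding SM_def by (auto intro: borel_measurable_continuous_on_restrict)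

lemma W_slice: "h \<in> {1..H} \<Longrightarrow> (\<lambda>s. W h s a) \<in> borel_measurable (SM SS)"
  using meas_slice[OF W_meas, of h a] by simp

lemma sm_meas:
  fixes F :: "'s \<Rightarrow> 'a \<Rightarrow> real"
  assumes "\<And>c. (\<lambda>s. F s c) \<in> borel_measurable (SM SS)"
  shows "(\<lambda>s. sm \<beta> (F s) b) \<in> borel_measurable (SM SS)"
  unfolding sm_def using assms by measurable

lemma piQ_policy: "is_policy SS H (softmax_policy \<beta> Q)"
  unfolding is_policy_def pmf_softmax by (auto intro!: sm_meas Q_slice)

lemma Qstar_slice_cong: "h \<in> {1..H} \<Longrightarrow> s \<in> SS \<Longrightarrow> Qstar SS H P r h s = W h s"
  using Qstar_W by auto

lemma piW_policy: "is_policy SS H (softmax_policy \<beta> (Qstar SS H P r))"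
  unfolding is_policy_def pmf_softmax
proof (intro ballI allI)
  fix h b assume h: "h \<in> {1..H}"
  have "(\<lambda>s. sm \<beta> (W h s) b) \<in> borel_measurable (SM SS)"
    by (rule sm_meas) (rule W_slice[OF h])
  then show "(\<lambda>s. sm \<beta> (Qstar SS H P r h s) b) \<in> borel_measurable (SM SS)"
    by (rule measurable_cong[THEN iffD1, rotated]) (use Qstar_slice_cong h in auto)
qed

sublocale pQ: pol SS H P r \<mu> "softmax_policy \<beta> Q"
  by (rule polI[OF piQ_policy])

sublocale pW: pol SS H P r \<mu> "softmax_policy \<beta> (Qstar SS H P r)"
  by (rule polI[OF piW_policy])

abbreviation "piQ \<equiv> softmax_policy \<beta> Q"
abbreviation "piW \<equiv> softmax_policy \<beta> (Qstar SS H P r)"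
abbreviation "GQ h \<equiv> Gv SS P r piQ (Suc H - h) h"

definition "Vq h s = (\<Sum>b\<in>UNIV. pmf (piQ h s) b * GQ h s b)"
definition "Vs h s = Max (range (W h s))"
definition "Dl h s = Vs h s - Vq h s"
definition "dl h s = Max (range (\<lambda>a. \<bar>Qstar SS H P r h s a - Q h s a\<bar>))"

lemma GQ_bnd: "h \<in> {1..H} \<Longrightarrow> s \<in> SS \<Longrightarrow> 0 \<le> GQ h s a \<and> GQ h s a \<le> real H"
  using pQ.G_bnd[of h s a] by auto

lemma W_bnd': "h \<in> {1..H} \<Longrightarrow> s \<in> SS \<Longrightarrow> 0 \<le> W h s a \<and> W h s a \<le> real H"
  using W_bnd[of h s a] by auto

lemma Vq_meas: "h \<in> {1..H} \<Longrightarrow> Vq h \<in> borel_measurable (SM SS)"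
  unfolding Vq_def[abs_def] by (rule avg_meas[OF pQ.G_meas pQ.pmf_meas])

lemma Vs_meas: "h \<in> {1..H} \<Longrightarrow> Vs h \<in> borel_measurable (SM SS)"
  unfolding Vs_def[abs_def] by (rule Max_meas[OF W_meas])

lemma Dl_meas: "h \<in> {1..H} \<Longrightarrow> Dl h \<in> borel_measurable (SM SS)"
  unfolding Dl_def[abs_def] by (intro borel_measurable_diff Vq_meas Vs_meas)

lemma Vq_bnd: "h \<in> {1..H} \<Longrightarrow> s \<in> SS \<Longrightarrow> 0 \<le> Vq h s \<and> Vq h s \<le> real H"
  unfolding Vq_def using pmf_avg_bnd[of 0 "GQ h s" "real H" "piQ h s"] GQ_bnd by auto

lemma Vs_bnd: "h \<in> {1..H} \<Longrightarrow> s \<in> SS \<Longrightarrow> 0 \<le> Vs h s \<and> Vs h s \<le> real H"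
  unfolding Vs_def using W_bnd' by (auto simp: Max_ge_iff Max_le_iff)

lemma Dl_abs: "h \<in> {1..H} \<Longrightarrow> s \<in> SS \<Longrightarrow> \<bar>Dl h s\<bar> \<le> real H"
proof -
  assume a: "h \<in> {1..H}" "s \<in> SS"
  show ?thesis unfolding Dl_def using Vq_bnd[OF a] Vs_bnd[OF a] by (simp add: abs_le_iff)
qed

lemma dl_W: "h \<in> {1..H} \<Longrightarrow> s \<in> SS \<Longrightarrow> dl h s = Max (range (\<lambda>a. \<bar>W h s a - Q h s a\<bar>))"
  unfolding dl_def using Qstar_slice_cong by auto

lemma dl_meas: "h \<in> {1..H} \<Longrightarrow> dl h \<in> borel_measurable (SM SS)"
proof -
  assume h: "h \<in> {1..H}"
  have "(\<lambda>s. Max ((\<lambda>a. \<bar>W h s a - Q h s a\<bar>) ` UNIV)) \<in> borel_measurable (SM SS)"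
  proof (rule borel_measurable_Max)
    fix a :: 'a
    show "(\<lambda>s. \<bar>W h s a - Q h s a\<bar>) \<in> borel_measurable (SM SS)"
      using W_slice[OF h, of a] Q_slice[OF h, of a] by measurable
  qed simp
  then show ?thesis
    by (rule measurable_cong[THEN iffD1, rotated]) (use dl_W h in auto)
qed

lemma dl_nonneg: "0 \<le> dl h s"
  unfolding dl_def by (rule order_trans[OF abs_ge_zero Max_ge]) auto

lemma dl_ge: "h \<in> {1..H} \<Longrightarrow> s \<in> SS \<Longrightarrow> \<bar>W h s a - Q h s a\<bar> \<le> dl h s"
  using dl_W by (auto intro: Max_ge)

lemma Dl_pt:
  assumes h: "h \<in> {1..H}" and s: "s \<in> SS"
  shows "Dl h s \<le> ln (real CARD('a)) / \<beta> + 2 * \<beta> * real H * dl h s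
     + (\<Sum>b\<in>UNIV. pmf (piW h s) b * (W h s b - GQ h s b))"
proof -
  have pw: "pmf (piW h s) b = sm \<beta> (W h s) b" for b
    using Qstar_slice_cong[OF h s] by (simp add: pmf_softmax)
  have pq: "pmf (piQ h s) b = sm \<beta> (Q h s) b" for b
    by (simp add: pmf_softmax)
  have decomp: "Dl h s = (Vs h s - (\<Sum>b\<in>UNIV. sm \<beta> (W h s) b * W h s b))
      + (\<Sum>b\<in>UNIV. sm \<beta> (W h s) b * (W h s b - GQ h s b))
      + (\<Sum>b\<in>UNIV. (sm \<beta> (W h s) b - sm \<beta> (Q h s) b) * GQ h s b)"
    unfolding Dl_def Vq_def pq
    by (simp add: algebra_simps sum_subtractf sum.distrib)
  have t1: "Vs h s - (\<Sum>b\<in>UNIV. sm \<beta> (W h s) b * W h s b) \<le> ln (real CARD('a)) / \<beta>"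
    unfolding Vs_def by (rule softmax_gap[OF beta])
  have t3: "(\<Sum>b\<in>UNIV. (sm \<beta> (W h s) b - sm \<beta> (Q h s) b) * GQ h s b)
      \<le> real H * (2 * \<beta> * Max (range (\<lambda>a. \<bar>W h s a - Q h s a\<bar>)))"
    by (rule softmax_tv[OF beta]) (use GQ_bnd[OF h s] in auto)
  show ?thesis
    using decomp t1 t3 dl_W[OF h s] unfolding pw by (simp add: algebra_simps)
qed

lemma W_G_abs: "h \<in> {1..H} \<Longrightarrow> s \<in> SS \<Longrightarrow> \<bar>W h s a - GQ h s a\<bar> \<le> real H"
proof -
  assume a: "h \<in> {1..H}" "s \<in> SS"
  show ?thesis using W_bnd'[OF a, of a] GQ_bnd[OF a, of a] by (simp add: abs_le_iff)
qed

lemma W_G_meas: "h \<in> {1..H} \<Longrightarrow> (\<lambda>x. W h (fst x) (snd x) - GQ h (fst x) (snd x)) \<in> borel_measurable (SAM SS)"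
  by (intro borel_measurable_diff W_meas pQ.G_meas)

lemma WG_step:
  assumes h: "h \<in> {1..<H}" and x: "x \<in> space (SAM SS)"
  shows "W h (fst x) (snd x) - GQ h (fst x) (snd x) = (\<integral>y. Dl (Suc h) (fst y) \<partial>step_kernel SS P piW h x)"
proof -
  obtain s a where x': "x = (s, a)" "s \<in> SS" using x by auto
  have h1: "h \<in> {1..H}" "Suc h \<le> H" "Suc h \<in> {1..H}" using h by auto
  have Pp: "prob_space (P h s a)" "sets (P h s a) = sets (SM SS)"
    using P_prob[OF h1(1) x'(2)] sets_P[OF h1(1) x'(2)] by auto
  have We: "W h s a = r h s a + (\<integral>s'. Vs (Suc h) s' \<partial>P h s a)"
    using h by (simp add: Vs_def Suc_diff_le)
  have Ge: "GQ h s a = r h s a + (\<integral>s'. Vq (Suc h) s' \<partial>P h s a)"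
    using h by (simp add: Vq_def Suc_diff_le)
  have iVs: "integrable (P h s a) (Vs (Suc h))"
    by (rule integ_gen[OF Pp Vs_meas[OF h1(3)], where B="real H"]) (use Vs_bnd[OF h1(3)] in auto)
  have iVq: "integrable (P h s a) (Vq (Suc h))"
    by (rule integ_gen[OF Pp Vq_meas[OF h1(3)], where B="real H"]) (use Vq_bnd[OF h1(3)] in auto)
  have "W h s a - GQ h s a = (\<integral>s'. Vs (Suc h) s' \<partial>P h s a) - (\<integral>s'. Vq (Suc h) s' \<partial>P h s a)"
    using We Ge by simp
  also have "\<dots> = (\<integral>s'. Dl (Suc h) s' \<partial>P h s a)"
    unfolding Dl_def by (rule Bochner_Integration.integral_diff[OF iVs iVq, symmetric])
  also have "\<dots> = (\<integral>s'. (\<Sum>b\<in>UNIV. pmf (piW (Suc h) s') b * Dl (Suc h) s') \<partial>P h s a)"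
    by (simp add: sum_distrib_right[symmetric] sum_pmf_eq_1)
  also have "\<dots> = (\<integral>y. Dl (Suc h) (fst y) \<partial>step_kernel SS P piW h (s, a))"
  proof -
    have "(\<integral>y. Dl (Suc h) (fst y) \<partial>step_kernel SS P piW h (s, a))
        = (\<integral>s'. (\<Sum>b\<in>UNIV. pmf (piW (Suc h) s') b * Dl (Suc h) (fst (s', b))) \<partial>P h s a)"
      by (rule pW.int_step[OF h1(1,2) x'(2) pQ.fst_meas[OF Dl_meas[OF h1(3)]], where B="real H"])
         (use Dl_abs[OF h1(3)] in auto)
    then show ?thesis by simp
  qed
  finally show ?thesis using x' by simp
qed

lemma WG_last: "W H s a - GQ H s a = 0"
  by simp

lemma main_step:
  assumes h: "h \<in> {1..H}" and idl: "integrable (traj_law SS P \<mu> piW h) (\<lambda>x. dl h (fst x))"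
  shows "(\<integral>x. Dl h (fst x) \<partial>traj_law SS P \<mu> piW h)
     \<le> ln (real CARD('a)) / \<beta> + 2 * \<beta> * real H * (\<integral>x. dl h (fst x) \<partial>traj_law SS P \<mu> piW h)
       + (if h < H then (\<integral>x. Dl (Suc h) (fst x) \<partial>traj_law SS P \<mu> piW (Suc h)) else 0)"
proof -
  define T where "T = traj_law SS P \<mu> piW h"
  have T: "prob_space T" "sets T = sets (SAM SS)" unfolding T_def using pW.traj_prob[OF h] by auto
  have spT: "space T = SS \<times> UNIV" using sets_eq_imp_space_eq[OF T(2)] by simp
  define c where "c = ln (real CARD('a)) / \<beta>"
  define k where "k = 2 * \<beta> * real H"
  define \<psi> where "\<psi> x = (\<Sum>b\<in>UNIV. pmf (piW h (fst x)) b * (W h (fst x) b - GQ h (fst x) b))" for x :: "'s \<times> 'a"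
  have \<psi>m: "\<psi> \<in> borel_measurable (SAM SS)"
    unfolding \<psi>_def[abs_def] by (rule pW.avg_meas_SAM[OF W_G_meas[OF h] h])
  have \<psi>b: "\<bar>\<psi> x\<bar> \<le> real H" if "x \<in> space (SAM SS)" for x
  proof -
    have fx: "fst x \<in> SS" using that by auto
    have lo: "- real H \<le> W h (fst x) b - GQ h (fst x) b" and hi: "W h (fst x) b - GQ h (fst x) b \<le> real H" for b
      using W_G_abs[OF h fx, of b] by (simp_all add: abs_le_iff)
    show ?thesis unfolding \<psi>_def
      using pmf_avg_bnd[of "- real H" "\<lambda>b. W h (fst x) b - GQ h (fst x) b" "real H" "piW h (fst x)", OF lo hi]
      by (simp add: abs_le_iff)
  qed
  have iD: "integrable T (\<lambda>x. Dl h (fst x))"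
    by (rule integ_gen[OF T pQ.fst_meas[OF Dl_meas[OF h]], where B="real H"]) (use Dl_abs[OF h] in auto)
  have i\<psi>: "integrable T \<psi>"
    by (rule integ_gen[OF T \<psi>m \<psi>b])
  have idl': "integrable T (\<lambda>x. dl h (fst x))" using idl unfolding T_def .
  have iR: "integrable T (\<lambda>x. c + k * dl h (fst x) + \<psi> x)"
    using idl' i\<psi> T(1) by (intro Bochner_Integration.integrable_add integrable_mult_right) (auto simp: prob_space.finite_measure finite_measure.integrable_const)
  have "(\<integral>x. Dl h (fst x) \<partial>T) \<le> (\<integral>x. c + k * dl h (fst x) + \<psi> x \<partial>T)"
  proof (rule integral_mono[OF iD iR])
    fix x assume "x \<in> space T"
    then have "fst x \<in> SS" using spT by auto
    then show "Dl h (fst x) \<le> c + k * dl h (fst x) + \<psi> x"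
      using Dl_pt[OF h] unfolding c_def k_def \<psi>_def by (simp add: algebra_simps)
  qed
  also have "\<dots> = c + k * (\<integral>x. dl h (fst x) \<partial>T) + (\<integral>x. \<psi> x \<partial>T)"
    using idl' i\<psi> T(1) by (simp add: prob_space.prob_space integral_mult_right_zero prob_space_def finite_measure.integrable_const)
  also have "(\<integral>x. \<psi> x \<partial>T) = (\<integral>x. W h (fst x) (snd x) - GQ h (fst x) (snd x) \<partial>T)"
    unfolding \<psi>_def[abs_def] T_def
    using pW.traj_avg[where \<phi>="\<lambda>s a. W h s a - GQ h s a" and B="real H", OF h W_G_meas[OF h] W_G_abs[OF h]]
    by simp
  also have "\<dots> = (if h < H then (\<integral>x. Dl (Suc h) (fst x) \<partial>traj_law SS P \<mu> piW (Suc h)) else 0)"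
  proof (cases "h < H")
    case True
    have hh: "h \<in> {1..<H}" using h True by auto
    have D: "prob_space (init_dist SS \<mu> piW)" "sets (init_dist SS \<mu> piW) = sets (SAM SS)"
      using pW.init_prob h by auto
    have "(\<integral>x. W h (fst x) (snd x) - GQ h (fst x) (snd x) \<partial>T)
        = (\<integral>x. (\<integral>y. Dl (Suc h) (fst y) \<partial>step_kernel SS P piW h x) \<partial>T)"
      by (rule int_cong_gen[OF T(2)]) (use WG_step[OF hh] in auto)
    also have "\<dots> = (\<integral>x. Dl (Suc h) (fst x) \<partial>traj_law SS P \<mu> piW (Suc h))"
    proof -
      have e: "Suc h - 1 = Suc (h - 1)" "1 + (h - 1) = h" using h by auto
      have "(\<integral>x. Dl (Suc h) (fst x) \<partial>occ SS P piW 1 (init_dist SS \<mu> piW) (Suc (h - 1)))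
          = (\<integral>x. (\<integral>y. Dl (Suc h) (fst y) \<partial>step_kernel SS P piW (1 + (h - 1)) x) \<partial>occ SS P piW 1 (init_dist SS \<mu> piW) (h - 1))"
        by (rule pW.int_occ_Suc[OF D _ _ pQ.fst_meas[OF Dl_meas], where B="real H"])
           (use h True Dl_abs in auto)
      then show ?thesis unfolding T_def traj_law_def e by simp
    qed
    finally show ?thesis using True by simp
  next
    case False
    then have "h = H" using h by auto
    then show ?thesis by simp
  qed
  finally show ?thesis unfolding T_def c_def k_def by simp
qed

lemma main_ind:
  assumes idl: "\<And>j. j \<in> {1..H} \<Longrightarrow> integrable (traj_law SS P \<mu> piW j) (\<lambda>x. dl j (fst x))"
  shows "m < H \<Longrightarrow> (\<integral>x. Dl (H - m) (fst x) \<partial>traj_law SS P \<mu> piW (H - m))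
     \<le> real (Suc m) * (ln (real CARD('a)) / \<beta>)
       + 2 * \<beta> * real H * (\<Sum>j = H - m..H. \<integral>x. dl j (fst x) \<partial>traj_law SS P \<mu> piW j)"
proof (induction m)
  case 0
  have h: "H \<in> {1..H}" using 0 by auto
  show ?case using main_step[OF h idl[OF h]] by simp
next
  case (Suc m)
  define h where "h = H - Suc m"
  have h: "h \<in> {1..H}" "h < H" "Suc h = H - m" using Suc.prems unfolding h_def by auto
  have IH: "(\<integral>x. Dl (Suc h) (fst x) \<partial>traj_law SS P \<mu> piW (Suc h))
     \<le> real (Suc m) * (ln (real CARD('a)) / \<beta>)
       + 2 * \<beta> * real H * (\<Sum>j = Suc h..H. \<integral>x. dl j (fst x) \<partial>traj_law SS P \<mu> piW j)"
    using Suc h by simp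
  have sp: "(\<Sum>j = h..H. \<integral>x. dl j (fst x) \<partial>traj_law SS P \<mu> piW j)
      = (\<integral>x. dl h (fst x) \<partial>traj_law SS P \<mu> piW h) + (\<Sum>j = Suc h..H. \<integral>x. dl j (fst x) \<partial>traj_law SS P \<mu> piW j)"
    using h by (subst sum.atLeast_Suc_atMost) auto
  have "(\<integral>x. Dl h (fst x) \<partial>traj_law SS P \<mu> piW h)
     \<le> ln (real CARD('a)) / \<beta> + 2 * \<beta> * real H * (\<integral>x. dl h (fst x) \<partial>traj_law SS P \<mu> piW h)
       + (\<integral>x. Dl (Suc h) (fst x) \<partial>traj_law SS P \<mu> piW (Suc h))"
    using main_step[OF h(1) idl[OF h(1)]] h(2) by simp
  also have "\<dots> \<le> real (Suc (Suc m)) * (ln (real CARD('a)) / \<beta>)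
       + 2 * \<beta> * real H * (\<Sum>j = h..H. \<integral>x. dl j (fst x) \<partial>traj_law SS P \<mu> piW j)"
  proof -
    define c where "c = ln (real CARD('a)) / \<beta>"
    define k where "k = 2 * \<beta> * real H"
    define I where "I = (\<integral>x. dl h (fst x) \<partial>traj_law SS P \<mu> piW h)"
    define S where "S = (\<Sum>j = Suc h..H. \<integral>x. dl j (fst x) \<partial>traj_law SS P \<mu> piW j)"
    have e: "real (Suc (Suc m)) * c = c + real (Suc m) * c" by (simp add: distrib_right)
    have e2: "k * (I + S) = k * I + k * S" by (simp add: distrib_left)
    show ?thesis using IH e e2 unfolding sp c_def[symmetric] k_def[symmetric] I_def[symmetric] S_def[symmetric]
      by linarith
  qed
  finally show ?case unfolding h_def .
qed

lemma main_bound: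
  assumes H1: "1 \<le> H"
    and idl: "\<And>j. j \<in> {1..H} \<Longrightarrow> integrable (traj_law SS P \<mu> piW j) (\<lambda>x. dl j (fst x))"
  shows "mdp_Jstar SS H P r \<mu> - mdp_J SS H P r \<mu> piQ
     \<le> real H * (ln (real CARD('a)) / \<beta>)
       + 2 * \<beta> * real H * (\<Sum>j = 1..H. \<integral>x. dl j (fst x) \<partial>traj_law SS P \<mu> piW j)"
proof -
  have h1: "1 \<in> {1..H}" using H1 by auto
  have Js: "mdp_Jstar SS H P r \<mu> \<le> (\<integral>s. Vs 1 s \<partial>\<mu>)"
    using Jstar_le[OF H1] unfolding Vs_def .
  have JQ: "mdp_J SS H P r \<mu> piQ = (\<integral>s. Vq 1 s \<partial>\<mu>)"
    using pQ.J_G[OF H1] unfolding Vq_def by simp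
  have iVs: "integrable \<mu> (Vs 1)"
    by (rule integ_gen[OF mu_prob sets_mu Vs_meas[OF h1], where B="real H"]) (use Vs_bnd[OF h1] in auto)
  have iVq: "integrable \<mu> (Vq 1)"
    by (rule integ_gen[OF mu_prob sets_mu Vq_meas[OF h1], where B="real H"]) (use Vq_bnd[OF h1] in auto)
  have "(\<integral>s. Vs 1 s \<partial>\<mu>) - (\<integral>s. Vq 1 s \<partial>\<mu>) = (\<integral>s. Dl 1 s \<partial>\<mu>)"
    unfolding Dl_def by (rule Bochner_Integration.integral_diff[OF iVs iVq, symmetric])
  also have "\<dots> = (\<integral>x. Dl 1 (fst x) \<partial>traj_law SS P \<mu> piW 1)"
  proof -
    have "(\<integral>x. Dl 1 (fst x) \<partial>init_dist SS \<mu> piW) = (\<integral>s. (\<Sum>b\<in>UNIV. pmf (piW 1 s) b * Dl 1 (fst (s, b))) \<partial>\<mu>)"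
      by (rule pW.int_init[OF H1 pQ.fst_meas[OF Dl_meas[OF h1]], where B="real H"]) (use Dl_abs[OF h1] in auto)
    then show ?thesis
      unfolding traj_law_def by (simp add: sum_distrib_right[symmetric] sum_pmf_eq_1)
  qed
  also have "\<dots> \<le> real (Suc (H - 1)) * (ln (real CARD('a)) / \<beta>)
       + 2 * \<beta> * real H * (\<Sum>j = H - (H - 1)..H. \<integral>x. dl j (fst x) \<partial>traj_law SS P \<mu> piW j)"
    using main_ind[OF idl, of "H - 1"] H1 by simp
  also have "\<dots> = real H * (ln (real CARD('a)) / \<beta>)
       + 2 * \<beta> * real H * (\<Sum>j = 1..H. \<integral>x. dl j (fst x) \<partial>traj_law SS P \<mu> piW j)"
    using H1 by simp
  finally show ?thesis using Js JQ by linarith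
qed

end

theorem theorem1:
  fixes SS :: "'s::euclidean_space set" and H :: nat
    and P :: "nat \<Rightarrow> 's \<Rightarrow> 'a::finite \<Rightarrow> 's measure"
    and r :: "nat \<Rightarrow> 's \<Rightarrow> 'a \<Rightarrow> real" and \<mu> :: "'s measure"
    and \<beta> :: real and Q :: "nat \<Rightarrow> 's \<Rightarrow> 'a \<Rightarrow> real"
  assumes mdp: "is_mdp SS H P r \<mu>"
    and beta: "\<beta> > 0"
    and Qcont: "\<forall>h\<in>{1..H}. \<forall>a. continuous_on SS (\<lambda>s. Q h s a)"
  shows "0 \<le> mdp_Jstar SS H P r \<mu> - mdp_J SS H P r \<mu> (softmax_policy \<beta> Q)
    \<and> ennreal (mdp_Jstar SS H P r \<mu> - mdp_J SS H P r \<mu> (softmax_policy \<beta> Q))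
        \<le> ennreal (real H * ln (real CARD('a)) / \<beta>)
          + ennreal (2 * \<beta> * real H) *
            (\<Sum>h = 1..H. \<integral>\<^sup>+ x. ennreal (Max (range (\<lambda>a. \<bar>Qstar SS H P r h (fst x) a - Q h (fst x) a\<bar>)))
               \<partial>traj_law SS P \<mu> (softmax_policy \<beta> (Qstar SS H P r)) h)"
proof -
  interpret m: main SS H P r \<mu> \<beta> Q
    by (rule main.intro[OF mdp.intro[OF mdp] main_axioms.intro[OF beta Qcont]])
  show ?thesis
  proof (cases "H = 0")
    case True
    have ne: "{\<pi> :: nat \<Rightarrow> 's \<Rightarrow> 'a pmf. is_policy SS H \<pi>} \<noteq> {}"
      using m.piQ_policy by (metis empty_iff mem_Collect_eq)
    have J0: "mdp_J SS H P r \<mu> \<pi> = 0" for \<pi> :: "nat \<Rightarrow> 's \<Rightarrow> 'a pmf"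
      unfolding mdp_J_def using True by simp
    have Js0: "mdp_Jstar SS H P r \<mu> = 0"
      unfolding mdp_Jstar_def J0 using ne by (rule cSUP_const)
    show ?thesis unfolding Js0 J0 by simp
  next
    case False
    then have H1: "1 \<le> H" by simp
    have nonneg: "0 \<le> mdp_Jstar SS H P r \<mu> - mdp_J SS H P r \<mu> (softmax_policy \<beta> Q)"
      using m.J_le_Jstar[OF H1 m.piQ_policy] by simp
    define I where "I j = (\<integral>\<^sup>+ x. ennreal (m.dl j (fst x)) \<partial>traj_law SS P \<mu> (softmax_policy \<beta> (Qstar SS H P r)) j)" for j
    have goalI: "(\<Sum>h = 1..H. \<integral>\<^sup>+ x. ennreal (Max (range (\<lambda>a. \<bar>Qstar SS H P r h (fst x) a - Q h (fst x) a\<bar>)))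
               \<partial>traj_law SS P \<mu> (softmax_policy \<beta> (Qstar SS H P r)) h) = (\<Sum>h = 1..H. I h)"
      unfolding I_def m.dl_def by simp
    have dlm: "(\<lambda>x. m.dl j (fst x)) \<in> borel_measurable (traj_law SS P \<mu> (softmax_policy \<beta> (Qstar SS H P r)) j)"
      if j: "j \<in> {1..H}" for j
      using m.pQ.fst_meas[OF m.dl_meas[OF j]] m.pW.traj_prob(2)[OF j]
      by (simp cong: measurable_cong_sets)
    show ?thesis
    proof (cases "\<exists>j\<in>{1..H}. I j = \<top>")
      case True
      then have st: "(\<Sum>h = 1..H. I h) = \<top>" by simp
      have ne: "ennreal (2 * \<beta> * real H) \<noteq> 0" using beta H1 by simp
      have "ennreal (2 * \<beta> * real H) * (\<Sum>h = 1..H. I h) = \<top>"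
        by (subst st) (rule ennreal_top_mult_left[OF ne])
      then show ?thesis unfolding goalI using nonneg by simp
    next
      case False
      have idl: "integrable (traj_law SS P \<mu> (softmax_policy \<beta> (Qstar SS H P r)) j) (\<lambda>x. m.dl j (fst x))"
        if j: "j \<in> {1..H}" for j
      proof (rule integrableI_nonneg[OF dlm[OF j]])
        show "AE x in traj_law SS P \<mu> (softmax_policy \<beta> (Qstar SS H P r)) j. 0 \<le> m.dl j (fst x)"
          by (simp add: m.dl_nonneg)
        show "(\<integral>\<^sup>+ x. ennreal (m.dl j (fst x)) \<partial>traj_law SS P \<mu> (softmax_policy \<beta> (Qstar SS H P r)) j) < \<infinity>"
          using False j unfolding I_def by (simp add: top.not_eq_extremum)
      qed
      have Ieq: "I j = ennreal (\<integral>x. m.dl j (fst x) \<partial>traj_law SS P \<mu> (softmax_policy \<beta> (Qstar SS H P r)) j)"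
        if j: "j \<in> {1..H}" for j
        unfolding I_def by (rule nn_integral_eq_integral[OF idl[OF j]]) (simp add: m.dl_nonneg)
      define S where "S = (\<Sum>j = 1..H. \<integral>x. m.dl j (fst x) \<partial>traj_law SS P \<mu> (softmax_policy \<beta> (Qstar SS H P r)) j)"
      have S0: "0 \<le> S" unfolding S_def
        by (intro sum_nonneg integral_nonneg_AE) (simp add: m.dl_nonneg)
      have sumI: "(\<Sum>h = 1..H. I h) = ennreal S"
        unfolding S_def
        by (subst sum_ennreal[symmetric]) (auto intro!: integral_nonneg_AE sum.cong simp: m.dl_nonneg Ieq)
      have ln0: "0 \<le> ln (real CARD('a))" by simp
      have A0: "0 \<le> real H * ln (real CARD('a)) / \<beta>" using ln0 beta by simp
      have B0: "0 \<le> 2 * \<beta> * real H" using beta by simp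
      have bound: "mdp_Jstar SS H P r \<mu> - mdp_J SS H P r \<mu> (softmax_policy \<beta> Q)
          \<le> real H * ln (real CARD('a)) / \<beta> + 2 * \<beta> * real H * S"
        using m.main_bound[OF H1 idl] unfolding S_def by simp
      have "ennreal (mdp_Jstar SS H P r \<mu> - mdp_J SS H P r \<mu> (softmax_policy \<beta> Q))
          \<le> ennreal (real H * ln (real CARD('a)) / \<beta> + 2 * \<beta> * real H * S)"
        by (rule ennreal_leI[OF bound])
      also have "\<dots> = ennreal (real H * ln (real CARD('a)) / \<beta>) + ennreal (2 * \<beta> * real H) * ennreal S"
        using A0 B0 S0 by (simp add: ennreal_plus ennreal_mult)
      finally show ?thesis unfolding goalI sumI using nonneg by simp
    qed
  qed
qed


end
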